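(* Let $f:\mathbb{R}^n\to\mathbb{R}$ be continuously differentiable and strictly concave, and $g=(g_1,\dots,g_m):\mathbb{R}^n\to\mathbb{R}^m$ be continuously differentiable with each $g_i$ convex, with $\nabla f$ and each $\nabla g_i$ locally Lipschitz. Assume there exists $x\in\mathbb{R}^n$ with $g(x)<\mathbf{0}_m$ componentwise (Slater's condition). Consider the primal-dual dynamics on $\mathbb{R}^n\times\mathbb{R}^m_{\ge0}$: $$\dot x=\nabla f(x)-\sum_{i=1}^m\lambda_i\nabla g_i(x),\qquad \dot\lambda=[g(x)]^+_\lambda .$$ Then the omega-limit set of any (Caratheodory) solution of this dynamics starting from any point in $\mathbb{R}^n\times\mathbb{R}^m_{\ge0}$ is invariant under this dynamics.
   Context: For scalars $a,b$, $[a]^+_b=a$ if $b>0$ and $[a]^+_b=\max\{0,a\}$ if $b=0$; for vectors, componentwise. A Caratheodory solution of $\dot z=F(z)$ on $[0,T)$ is an absolutely continuous map $\gamma$ with $\dot\gamma(t)=F(\gamma(t))$ for almost every $t$. For a solution $\gamma$ defined on $[0,\infty)$, its omega-limit set is $\Omega(\gamma)=\{y:\exists t_k\to\infty \text{ with } \gamma(t_k)\to y\}$. A set $S$ is invariant if every solution starting in $S$ remains in $S$. *)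

theory Defs
  imports "HOL-Analysis.Analysis"
begin

definition strictly_concave_on :: "'a::real_vector set \<Rightarrow> ('a \<Rightarrow> real) \<Rightarrow> bool" where
  "strictly_concave_on S f \<longleftrightarrow>
     (\<forall>x\<in>S. \<forall>y\<in>S. \<forall>t::real. x \<noteq> y \<and> 0 < t \<and> t < 1 \<longrightarrow>
        f ((1 - t) *\<^sub>R x + t *\<^sub>R y) > (1 - t) * f x + t * f y)"

definition locally_lipschitz :: "('a::metric_space \<Rightarrow> 'b::metric_space) \<Rightarrow> bool" where
  "locally_lipschitz F \<longleftrightarrow>
     (\<forall>x. \<exists>r>0. \<exists>L. \<forall>y\<in>ball x r. \<forall>z\<in>ball x r. dist (F y) (F z) \<le> L * dist y z)"

definition abs_continuous_on :: "real \<Rightarrow> real \<Rightarrow> (real \<Rightarrow> 'b::real_normed_vector) \<Rightarrow> bool" where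
  "abs_continuous_on a b \<gamma> \<longleftrightarrow>
     (\<forall>\<epsilon>>0. \<exists>\<delta>>0. \<forall>(k::nat) (u::nat \<Rightarrow> real) (v::nat \<Rightarrow> real).
        (\<forall>i<k. a \<le> u i \<and> u i \<le> v i \<and> v i \<le> b) \<and>
        (\<forall>i<k. \<forall>j<k. i \<noteq> j \<longrightarrow> v i \<le> u j \<or> v j \<le> u i) \<and>
        (\<Sum>i<k. v i - u i) < \<delta>
        \<longrightarrow> (\<Sum>i<k. norm (\<gamma> (v i) - \<gamma> (u i))) < \<epsilon>)"

definition caratheodory_sol ::
  "('a::euclidean_space \<Rightarrow> 'a) \<Rightarrow> 'a set \<Rightarrow> (real \<Rightarrow> 'a) \<Rightarrow> real \<Rightarrow> bool" where
  "caratheodory_sol F D \<gamma> T \<longleftrightarrow>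
     (\<forall>t\<in>{0..<T}. \<gamma> t \<in> D) \<and>
     (\<forall>b. 0 \<le> b \<and> b < T \<longrightarrow> abs_continuous_on 0 b \<gamma>) \<and>
     negligible {t \<in> {0..<T}. \<not> (\<gamma> has_vector_derivative F (\<gamma> t)) (at t)}"

definition caratheodory_sol_inf ::
  "('a::euclidean_space \<Rightarrow> 'a) \<Rightarrow> 'a set \<Rightarrow> (real \<Rightarrow> 'a) \<Rightarrow> bool" where
  "caratheodory_sol_inf F D \<gamma> \<longleftrightarrow> (\<forall>T>0. caratheodory_sol F D \<gamma> T)"

definition omega_limit :: "(real \<Rightarrow> 'a::metric_space) \<Rightarrow> 'a set" where
  "omega_limit \<gamma> = {y. \<exists>s::nat \<Rightarrow> real. filterlim s at_top sequentially \<and> (\<lambda>k. \<gamma> (s k)) \<longlonglongrightarrow> y}"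

definition invariant_set ::
  "('a::euclidean_space \<Rightarrow> 'a) \<Rightarrow> 'a set \<Rightarrow> 'a set \<Rightarrow> bool" where
  "invariant_set F D S \<longleftrightarrow>
     (\<forall>\<gamma> T. T > 0 \<and> caratheodory_sol F D \<gamma> T \<and> \<gamma> 0 \<in> S \<longrightarrow> (\<forall>t\<in>{0..<T}. \<gamma> t \<in> S))"

definition proj_pos :: "real \<Rightarrow> real \<Rightarrow> real" where
  "proj_pos a b = (if b > 0 then a else max 0 a)"

definition primal_dual_field ::
  "(real^'n \<Rightarrow> real^'n) \<Rightarrow> ('m::finite \<Rightarrow> real^'n \<Rightarrow> real) \<Rightarrow> ('m \<Rightarrow> real^'n \<Rightarrow> real^'n)
   \<Rightarrow> (real^'n) \<times> (real^'m) \<Rightarrow> (real^'n) \<times> (real^'m)" where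
  "primal_dual_field df g dg z =
     (case z of (x, l) \<Rightarrow>
       (df x - (\<Sum>i\<in>UNIV. (l $ i) *\<^sub>R dg i x), \<chi> i. proj_pos (g i x) (l $ i)))"

definition pd_domain :: "((real^'n) \<times> (real^'m)) set" where
  "pd_domain = {(x, l). \<forall>i. 0 \<le> l $ i}"

end

theory Submission
  imports Defs
begin

hide_const (open) Polynomial.content


lemma ac_set:
  fixes \<psi> :: "real \<Rightarrow> 'b::real_normed_vector"
  assumes ac: "abs_continuous_on a b \<psi>" and e: "\<epsilon> > 0"
  obtains \<delta> where "\<delta> > 0" "\<And>Q. finite Q \<Longrightarrow> (\<forall>(u,v)\<in>Q. a \<le> u \<and> u \<le> v \<and> v \<le> b) \<Longrightarrow>
     (\<forall>p\<in>Q. \<forall>q\<in>Q. p \<noteq> q \<longrightarrow> snd p \<le> fst q \<or> snd q \<le> fst p) \<Longrightarrow>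
     (\<Sum>(u,v)\<in>Q. v - u) < \<delta> \<Longrightarrow> (\<Sum>(u,v)\<in>Q. norm (\<psi> v - \<psi> u)) < \<epsilon>"
proof -
  from mp[OF spec[OF ac[unfolded abs_continuous_on_def], of \<epsilon>] e]
  obtain \<delta> where dH: "\<delta> > 0 \<and> (\<forall>(k::nat) (u::nat \<Rightarrow> real) (v::nat \<Rightarrow> real). (\<forall>i<k. a \<le> u i \<and> u i \<le> v i \<and> v i \<le> b) \<and>
        (\<forall>i<k. \<forall>j<k. i \<noteq> j \<longrightarrow> v i \<le> u j \<or> v j \<le> u i) \<and>
        (\<Sum>i<k. v i - u i) < \<delta>
        \<longrightarrow> (\<Sum>i<k. norm (\<psi> (v i) - \<psi> (u i))) < \<epsilon>)" ..
  note d = conjunct1[OF dH] and H0 = conjunct2[OF dH]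
  note H = H0[rule_format]
  show ?thesis
  proof (rule that[OF d])
    fix Q :: "(real \<times> real) set"
    assume fQ: "finite Q" and Q1: "\<forall>(u,v)\<in>Q. a \<le> u \<and> u \<le> v \<and> v \<le> b"
      and Q2: "\<forall>p\<in>Q. \<forall>q\<in>Q. p \<noteq> q \<longrightarrow> snd p \<le> fst q \<or> snd q \<le> fst p"
      and Q3: "(\<Sum>(u,v)\<in>Q. v - u) < \<delta>"
    obtain h where h: "bij_betw h {..<card Q} Q"
      using fQ ex_bij_betw_nat_finite lessThan_atLeast0 by metis
    have eq1: "(\<Sum>i<card Q. snd (h i) - fst (h i)) = (\<Sum>(u,v)\<in>Q. v - u)"
      using sum.reindex_bij_betw[OF h, of "\<lambda>(u,v). v - u"] by (simp add: case_prod_beta)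
    have eq2: "(\<Sum>i<card Q. norm (\<psi> (snd (h i)) - \<psi> (fst (h i)))) = (\<Sum>(u,v)\<in>Q. norm (\<psi> v - \<psi> u))"
      using sum.reindex_bij_betw[OF h, of "\<lambda>(u,v). norm (\<psi> v - \<psi> u)"] by (simp add: case_prod_beta)
    have c1: "\<forall>i<card Q. a \<le> fst (h i) \<and> fst (h i) \<le> snd (h i) \<and> snd (h i) \<le> b"
    proof (intro allI impI)
      fix i assume "i < card Q"
      then have "h i \<in> Q" using h by (simp add: bij_betw_apply)
      then show "a \<le> fst (h i) \<and> fst (h i) \<le> snd (h i) \<and> snd (h i) \<le> b" using Q1 by (auto simp: case_prod_beta)
    qed
    have c2: "\<forall>i<card Q. \<forall>j<card Q. i \<noteq> j \<longrightarrow> snd (h i) \<le> fst (h j) \<or> snd (h j) \<le> fst (h i)"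
    proof (intro allI impI)
      fix i j assume ij: "i < card Q" "j < card Q" "i \<noteq> j"
      then have "h i \<in> Q" "h j \<in> Q" using h by (simp_all add: bij_betw_apply)
      moreover have "h i \<noteq> h j" using ij h unfolding bij_betw_def inj_on_def by (meson lessThan_iff)
      ultimately show "snd (h i) \<le> fst (h j) \<or> snd (h j) \<le> fst (h i)" using Q2 by simp
    qed
    have c3: "(\<Sum>i<card Q. snd (h i) - fst (h i)) < \<delta>" using eq1 Q3 by simp
    have "(\<Sum>i<card Q. norm (\<psi> (snd (h i)) - \<psi> (fst (h i)))) < \<epsilon>"
      using spec[OF spec[OF spec[OF H0, of "card Q"], of "\<lambda>i. fst (h i)"], of "\<lambda>i. snd (h i)"] c1 c2 c3 by simp
    then show "(\<Sum>(u,v)\<in>Q. norm (\<psi> v - \<psi> u)) < \<epsilon>" using eq2 by simp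
  qed
qed



lemma deriv_local:
  fixes \<psi> :: "real \<Rightarrow> real"
  assumes "(\<psi> has_real_derivative D) (at t)" "D \<le> 0" "\<epsilon> > 0"
  shows "\<exists>r>0. \<forall>u v. t - r < u \<and> u \<le> t \<and> t \<le> v \<and> v < t + r \<longrightarrow> \<psi> v - \<psi> u \<le> \<epsilon> * (v - u)"
proof -
  have "(\<psi> has_derivative (\<lambda>h. D * h)) (at t)" using assms(1) by (simp add: has_field_derivative_def)
  then obtain r where r: "r > 0" and H: "\<And>y. norm (y - t) < r \<Longrightarrow> norm (\<psi> y - \<psi> t - D * (y - t)) \<le> (\<epsilon>/2) * norm (y - t)"
    using assms(3) unfolding has_derivative_at_alt by (meson half_gt_zero)
  show ?thesis
  proof (intro exI[of _ r] conjI r allI impI)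
    fix u v assume uv: "t - r < u \<and> u \<le> t \<and> t \<le> v \<and> v < t + r"
    have 1: "\<bar>\<psi> v - \<psi> t - D * (v - t)\<bar> \<le> (\<epsilon>/2) * \<bar>v - t\<bar>" using H[of v] uv by auto
    have 2: "\<bar>\<psi> u - \<psi> t - D * (u - t)\<bar> \<le> (\<epsilon>/2) * \<bar>u - t\<bar>" using H[of u] uv by auto
    have "D * (v - t) \<le> 0" "D * (u - t) \<ge> 0" using uv assms(2) by (auto intro: mult_nonpos_nonneg mult_nonpos_nonpos)
    moreover have "\<bar>v - t\<bar> = v - t" "\<bar>u - t\<bar> = t - u" using uv by auto
    ultimately show "\<psi> v - \<psi> u \<le> \<epsilon> * (v - u)" using 1 2 uv assms(3) unfolding abs_le_iff by (simp add: algebra_simps)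
  qed
qed

lemma cont_aux: "K = {u..v} \<Longrightarrow> u \<le> v \<Longrightarrow> content K = v - (u::real)" by simp

lemma sep_aux:
  fixes u v u' v' :: real
  assumes "K = {u..v}" "L = {u'..v'}" "u < v" "u' < v'" "interior K \<inter> interior L = {}"
  shows "v \<le> u' \<or> v' \<le> u"
proof (rule ccontr)
  assume "\<not> ?thesis"
  then have c: "u' < v" "u < v'" by auto
  define m where "m = (max u u' + min v v') / 2"
  have "max u u' < min v v'" using c assms(3,4) by auto
  then have "m \<in> {u<..<v}" "m \<in> {u'<..<v'}" unfolding m_def by auto
  then show False using assms(1,2,5) by auto
qed

lemma ac_mono:
  fixes \<psi> :: "real \<Rightarrow> real"
  assumes ab: "a \<le> b" and ac: "abs_continuous_on a b \<psi>" and E: "negligible E"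
    and der: "\<And>t. t \<in> {a<..<b} \<Longrightarrow> t \<notin> E \<Longrightarrow> \<exists>D. (\<psi> has_real_derivative D) (at t) \<and> D \<le> 0"
  shows "\<psi> b \<le> \<psi> a"
proof -
  have main: "\<psi> b - \<psi> a \<le> \<epsilon> * (b - a + 1)" if e: "\<epsilon> > 0" for \<epsilon>
  proof -
    obtain \<delta> where d: "\<delta> > 0" and ACQ: "\<And>Q. finite Q \<Longrightarrow> (\<forall>(u,v)\<in>Q. a \<le> u \<and> u \<le> v \<and> v \<le> b) \<Longrightarrow>
     (\<forall>p\<in>Q. \<forall>q\<in>Q. p \<noteq> q \<longrightarrow> snd p \<le> fst q \<or> snd q \<le> fst p) \<Longrightarrow>
     (\<Sum>(u,v)\<in>Q. v - u) < \<delta> \<Longrightarrow> (\<Sum>(u,v)\<in>Q. norm (\<psi> v - \<psi> u)) < \<epsilon>"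
      using ac_set[OF ac e] by blast
    define E' where "E' = E \<union> {a, b}"
    have nE': "negligible E'" using E by (simp add: E'_def)
    then have "(indicat_real E' has_integral 0) (cbox a b)" by (simp add: negligible)
    then obtain d1 where g1: "gauge d1" and d1: "\<And>p. p tagged_division_of (cbox a b) \<Longrightarrow> d1 fine p \<Longrightarrow>
        norm ((\<Sum>(x, k)\<in>p. content k *\<^sub>R indicat_real E' x) - 0) < \<delta>"
      using d unfolding has_integral by meson
    define S where "S = {a<..<b} - E"
    have "\<forall>t\<in>S. \<exists>r>0. \<forall>u v. t - r < u \<and> u \<le> t \<and> t \<le> v \<and> v < t + r \<longrightarrow> \<psi> v - \<psi> u \<le> \<epsilon> * (v - u)"
      using der deriv_local e unfolding S_def by blast
    then obtain r where r: "\<And>t. t \<in> S \<Longrightarrow> r t > 0"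
      and rH: "\<And>t u v. t \<in> S \<Longrightarrow> t - r t < u \<Longrightarrow> u \<le> t \<Longrightarrow> t \<le> v \<Longrightarrow> v < t + r t \<Longrightarrow> \<psi> v - \<psi> u \<le> \<epsilon> * (v - u)"
      by metis
    define d2 where "d2 t = ball t (if t \<in> S then r t else 1)" for t
    have g2: "gauge d2" unfolding gauge_def d2_def using r by auto
    obtain p where p: "p tagged_division_of (cbox a b)" and fp: "(\<lambda>x. d1 x \<inter> d2 x) fine p"
      using fine_division_exists[OF gauge_Int[OF g1 g2]] by blast
    have fp1: "d1 fine p" and fp2: "d2 fine p" using fp unfolding fine_Int by auto
    have fin: "finite p" using p by blast
    have K: "K = {Inf K..Sup K} \<and> Inf K \<le> x \<and> x \<le> Sup K \<and> a \<le> Inf K \<and> Sup K \<le> b \<and> K \<subseteq> d2 x" if xKp: "(x,K) \<in> p" for x K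
    proof -
      obtain u v where K: "K = cbox u v" using tagged_division_ofD(4)[OF p xKp] by blast
      have xK: "x \<in> K" using tagged_division_ofD(2)[OF p xKp] .
      have Ks: "K \<subseteq> {a..b}" using tagged_division_ofD(3)[OF p xKp] by simp
      have K2: "K = {u..v}" using K by simp
      have uv: "u \<le> v" using xK K2 by simp
      have IS: "Inf K = u" "Sup K = v" using K2 uv by simp_all
      have "u \<in> K" "v \<in> K" using K2 uv by simp_all
      then have ab': "a \<le> u" "v \<le> b" using Ks by auto
      have sub: "K \<subseteq> d2 x" using fp2 xKp by (rule fineD)
      show ?thesis unfolding IS using K2 xK ab' sub by simp
    qed
    define p1 where "p1 = {(x,K)\<in>p. x \<in> E'}"
    define p2 where "p2 = {(x,K)\<in>p. x \<notin> E'}"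
    have pu: "p = p1 \<union> p2" "p1 \<inter> p2 = {}" unfolding p1_def p2_def by auto
    have psub: "p1 \<subseteq> p" "p2 \<subseteq> p" unfolding p1_def p2_def by auto
    have fin1: "finite p1" "finite p2" using finite_subset[OF psub(1) fin] finite_subset[OF psub(2) fin] .
    define f where "f = (\<lambda>(x::real,K::real set). \<psi> (Sup K) - \<psi> (Inf K))"
    have tot: "\<psi> b - \<psi> a = sum f p"
      using additive_tagged_division_1[OF ab, of p \<psi>] p by (simp add: f_def)
    also have "\<dots> = sum f p1 + sum f p2" using pu fin1 by (simp add: sum.union_disjoint)
    finally have tot2: "\<psi> b - \<psi> a = sum f p1 + sum f p2" .
    have cont: "content K = Sup K - Inf K" if "(x,K) \<in> p" for x K
      using K[OF that] by (intro cont_aux) auto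
    have s2: "sum f p2 \<le> \<epsilon> * (b - a)"
    proof -
      have "sum f p2 \<le> (\<Sum>(x,K)\<in>p2. \<epsilon> * content K)"
      proof (rule sum_mono)
        fix xK assume "xK \<in> p2"
        then obtain x K where xK: "xK = (x,K)" "(x,K) \<in> p" "x \<notin> E'" unfolding p2_def by auto
        note KK = K[OF xK(2)]
        have xS: "x \<in> S" using KK xK(3) unfolding S_def E'_def by (auto simp: less_le)
        have "Inf K \<in> d2 x" "Sup K \<in> d2 x" using KK by auto
        then have "x - r x < Inf K" "Sup K < x + r x" using xS unfolding d2_def by (auto simp: dist_real_def)
        then show "f xK \<le> (case xK of (x, K) \<Rightarrow> \<epsilon> * content K)"
          using rH[OF xS, of "Inf K" "Sup K"] KK cont[OF xK(2)] xK(1) by (simp add: f_def)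
      qed
      also have "\<dots> = \<epsilon> * (\<Sum>(x,K)\<in>p2. content K)" by (simp add: sum_distrib_left case_prod_beta)
      also have "(\<Sum>(x,K)\<in>p2. content K) \<le> (\<Sum>(x,K)\<in>p. content K)"
        using pu fin by (intro sum_mono2) (auto simp: case_prod_beta)
      also have "(\<Sum>(x,K)\<in>p. content K) = b - a"
        using additive_content_tagged_division[OF p] ab by simp
      finally show ?thesis using e by (simp add: mult_left_mono)
    qed
    have s1: "sum f p1 < \<epsilon>"
    proof -
      define p1' where "p1' = {(x,K)\<in>p1. Inf K < Sup K}"
      have "p1' \<subseteq> p1" unfolding p1'_def by auto
      then have fin1': "finite p1'" using fin1(1) by (rule finite_subset)
      have inj: "inj_on (\<lambda>xK. (Inf (snd xK), Sup (snd xK))) p1'"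
      proof (rule inj_onI)
        fix i j assume ij: "i \<in> p1'" "j \<in> p1'" "(Inf (snd i), Sup (snd i)) = (Inf (snd j), Sup (snd j))"
        show "i = j"
        proof (rule ccontr)
          assume ne: "i \<noteq> j"
          have ip: "i \<in> p" "j \<in> p" using ij unfolding p1'_def p1_def by auto
          have "interior (snd i) \<inter> interior (snd j) = {}"
            using tagged_division_ofD(5)[OF p, of "fst i" "snd i" "fst j" "snd j"] ip ne by auto
          moreover have "snd i = {Inf (snd i)..Sup (snd i)}" "snd j = {Inf (snd j)..Sup (snd j)}"
            using K[of "fst i" "snd i"] K[of "fst j" "snd j"] ip by auto
          moreover have "Inf (snd i) < Sup (snd i)" using ij unfolding p1'_def by auto
          moreover have "Inf (snd j) = Inf (snd i)" "Sup (snd j) = Sup (snd i)" using ij(3) by auto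
          ultimately show False using sep_aux[of "snd i" "Inf (snd i)" "Sup (snd i)" "snd j" "Inf (snd i)" "Sup (snd i)"]
            by auto
        qed
      qed
      have "sum f p1 \<le> (\<Sum>xK\<in>p1. norm (\<psi> (Sup (snd xK)) - \<psi> (Inf (snd xK))))"
        by (intro sum_mono) (auto simp: f_def)
      also have "\<dots> = (\<Sum>xK\<in>p1'. norm (\<psi> (Sup (snd xK)) - \<psi> (Inf (snd xK))))"
      proof (rule sum.mono_neutral_right[OF fin1(1)])
        show "p1' \<subseteq> p1" unfolding p1'_def by auto
        show "\<forall>i\<in>p1 - p1'. norm (\<psi> (Sup (snd i)) - \<psi> (Inf (snd i))) = 0"
        proof
          fix i assume "i \<in> p1 - p1'"
          then have "i \<in> p" "\<not> Inf (snd i) < Sup (snd i)" unfolding p1_def p1'_def by auto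
          moreover have "Inf (snd i) \<le> Sup (snd i)" using K[of "fst i" "snd i"] \<open>i \<in> p\<close> by auto
          ultimately show "norm (\<psi> (Sup (snd i)) - \<psi> (Inf (snd i))) = 0" by auto
        qed
      qed
      also have "\<dots> = (\<Sum>(u,v)\<in>(\<lambda>xK. (Inf (snd xK), Sup (snd xK))) ` p1'. norm (\<psi> v - \<psi> u))"
      proof -
        show ?thesis using sum.reindex[OF inj, of "\<lambda>(u,v). norm (\<psi> v - \<psi> u)"] by (simp add: comp_def)
      qed
      also have "\<dots> < \<epsilon>"
      proof (rule ACQ)
        show "finite ((\<lambda>xK. (Inf (snd xK), Sup (snd xK))) ` p1')" using fin1' by simp
        show "\<forall>(u, v)\<in>(\<lambda>xK. (Inf (snd xK), Sup (snd xK))) ` p1'. a \<le> u \<and> u \<le> v \<and> v \<le> b"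
          using K unfolding p1'_def p1_def by fastforce
        show "\<forall>pp\<in>(\<lambda>xK. (Inf (snd xK), Sup (snd xK))) ` p1'. \<forall>q\<in>(\<lambda>xK. (Inf (snd xK), Sup (snd xK))) ` p1'.
                pp \<noteq> q \<longrightarrow> snd pp \<le> fst q \<or> snd q \<le> fst pp"
        proof (intro ballI impI)
          fix pp q assume "pp \<in> (\<lambda>xK. (Inf (snd xK), Sup (snd xK))) ` p1'" "q \<in> (\<lambda>xK. (Inf (snd xK), Sup (snd xK))) ` p1'" "pp \<noteq> q"
          then obtain i j where ij: "i \<in> p1'" "j \<in> p1'" "pp = (Inf (snd i), Sup (snd i))" "q = (Inf (snd j), Sup (snd j))" "i \<noteq> j"
            by auto
          have ip: "i \<in> p" "j \<in> p" using ij unfolding p1'_def p1_def by auto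
          have dis: "interior (snd i) \<inter> interior (snd j) = {}"
            using tagged_division_ofD(5)[OF p, of "fst i" "snd i" "fst j" "snd j"] ip ij by auto
          have eqs: "snd i = {Inf (snd i)..Sup (snd i)}" "snd j = {Inf (snd j)..Sup (snd j)}"
            using K[of "fst i" "snd i"] K[of "fst j" "snd j"] ip by auto
          have lt: "Inf (snd i) < Sup (snd i)" "Inf (snd j) < Sup (snd j)" using ij unfolding p1'_def by auto
          show "snd pp \<le> fst q \<or> snd q \<le> fst pp"
            using sep_aux[OF eqs lt dis] ij(3,4) by simp
        qed
        have "(\<Sum>(u, v)\<in>(\<lambda>xK. (Inf (snd xK), Sup (snd xK))) ` p1'. v - u) = (\<Sum>xK\<in>p1'. Sup (snd xK) - Inf (snd xK))"
        proof -
          show ?thesis using sum.reindex[OF inj, of "\<lambda>(u,v). v - u"] by (simp add: comp_def)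
        qed
        also have "\<dots> \<le> (\<Sum>xK\<in>p1. content (snd xK))"
        proof -
          have "(\<Sum>xK\<in>p1'. Sup (snd xK) - Inf (snd xK)) = (\<Sum>xK\<in>p1'. content (snd xK))"
            by (intro sum.cong refl) (use cont in \<open>auto simp: p1'_def p1_def\<close>)
          also have "\<dots> \<le> (\<Sum>xK\<in>p1. content (snd xK))"
            using fin1 by (intro sum_mono2) (auto simp: p1'_def)
          finally show ?thesis .
        qed
        also have "\<dots> = (\<Sum>(x, k)\<in>p. content k *\<^sub>R indicat_real E' x)"
        proof -
          have "(\<Sum>(x, k)\<in>p. content k *\<^sub>R indicat_real E' x) = (\<Sum>(x, k)\<in>p1. content k *\<^sub>R indicat_real E' x) + (\<Sum>(x, k)\<in>p2. content k *\<^sub>R indicat_real E' x)"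
            using pu fin1 by (simp add: sum.union_disjoint)
          also have "(\<Sum>(x, k)\<in>p2. content k *\<^sub>R indicat_real E' x) = 0"
            by (intro sum.neutral) (auto simp: p2_def)
          also have "(\<Sum>(x, k)\<in>p1. content k *\<^sub>R indicat_real E' x) = (\<Sum>xK\<in>p1. content (snd xK))"
            by (intro sum.cong refl) (auto simp: p1_def)
          finally show ?thesis by simp
        qed
        also have "\<dots> < \<delta>" using d1[OF p fp1] by auto
        finally show "(\<Sum>(u, v)\<in>(\<lambda>xK. (Inf (snd xK), Sup (snd xK))) ` p1'. v - u) < \<delta>" .
      qed
      finally show ?thesis .
    qed
    show ?thesis using tot2 s1 s2 by (simp add: algebra_simps)
  qed
  show ?thesis
  proof (rule ccontr)
    assume "\<not> ?thesis"
    then have pos: "\<psi> b - \<psi> a > 0" by simp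
    define \<epsilon> where "\<epsilon> = (\<psi> b - \<psi> a) / (2 * (b - a + 1))"
    have e: "\<epsilon> > 0" using pos ab unfolding \<epsilon>_def by auto
    have "\<epsilon> * (b - a + 1) = (\<psi> b - \<psi> a) / 2" unfolding \<epsilon>_def using ab by (simp add: field_simps)
    then show False using main[OF e] pos by simp
  qed
qed


lemma ac_cont:
  fixes \<gamma> :: "real \<Rightarrow> 'b::real_normed_vector"
  assumes ac: "abs_continuous_on a b \<gamma>"
  shows "continuous_on {a..b} \<gamma>"
  unfolding continuous_on_iff
proof (intro ballI allI impI)
  fix t e assume t: "t \<in> {a..b}" and e: "(0::real) < e"
  obtain \<delta> where d: "\<delta> > 0" and H: "\<And>Q. finite Q \<Longrightarrow> (\<forall>(u,v)\<in>Q. a \<le> u \<and> u \<le> v \<and> v \<le> b) \<Longrightarrow>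
     (\<forall>p\<in>Q. \<forall>q\<in>Q. p \<noteq> q \<longrightarrow> snd p \<le> fst q \<or> snd q \<le> fst p) \<Longrightarrow>
     (\<Sum>(u,v)\<in>Q. v - u) < \<delta> \<Longrightarrow> (\<Sum>(u,v)\<in>Q. norm (\<gamma> v - \<gamma> u)) < e"
    using ac_set[OF ac e] by blast
  show "\<exists>d>0. \<forall>x'\<in>{a..b}. dist x' t < d \<longrightarrow> dist (\<gamma> x') (\<gamma> t) < e"
  proof (intro exI[of _ \<delta>] conjI d ballI impI)
    fix s assume s: "s \<in> {a..b}" "dist s t < \<delta>"
    have "(\<Sum>(u,v)\<in>{(min s t, max s t)}. norm (\<gamma> v - \<gamma> u)) < e"
      by (rule H) (use s t in \<open>auto simp: dist_real_def\<close>)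
    then show "dist (\<gamma> s) (\<gamma> t) < e"
      by (cases "s \<le> t") (auto simp: dist_norm norm_minus_commute min_def max_def)
  qed
qed

lemma ac_sub:
  assumes "abs_continuous_on a b \<gamma>" "a \<le> c" "d \<le> b"
  shows "abs_continuous_on c d \<gamma>"
  unfolding abs_continuous_on_def
proof (intro allI impI)
  fix \<epsilon> :: real assume e: "\<epsilon> > 0"
  from mp[OF spec[OF assms(1)[unfolded abs_continuous_on_def], of \<epsilon>] e]
  obtain \<delta> where d: "\<delta> > 0" and H: "\<forall>(k::nat) (u::nat \<Rightarrow> real) (v::nat \<Rightarrow> real). (\<forall>i<k. a \<le> u i \<and> u i \<le> v i \<and> v i \<le> b) \<and>
        (\<forall>i<k. \<forall>j<k. i \<noteq> j \<longrightarrow> v i \<le> u j \<or> v j \<le> u i) \<and>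
        (\<Sum>i<k. v i - u i) < \<delta>
        \<longrightarrow> (\<Sum>i<k. norm (\<gamma> (v i) - \<gamma> (u i))) < \<epsilon>" by blast
  show "\<exists>\<delta>>0. \<forall>(k::nat) (u::nat \<Rightarrow> real) (v::nat \<Rightarrow> real). (\<forall>i<k. c \<le> u i \<and> u i \<le> v i \<and> v i \<le> d) \<and>
        (\<forall>i<k. \<forall>j<k. i \<noteq> j \<longrightarrow> v i \<le> u j \<or> v j \<le> u i) \<and>
        (\<Sum>i<k. v i - u i) < \<delta>
        \<longrightarrow> (\<Sum>i<k. norm (\<gamma> (v i) - \<gamma> (u i))) < \<epsilon>"
  proof (intro exI[of _ \<delta>] conjI d allI impI)
    fix k :: nat and u v :: "nat \<Rightarrow> real"
    assume h: "(\<forall>i<k. c \<le> u i \<and> u i \<le> v i \<and> v i \<le> d) \<and>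
        (\<forall>i<k. \<forall>j<k. i \<noteq> j \<longrightarrow> v i \<le> u j \<or> v j \<le> u i) \<and> (\<Sum>i<k. v i - u i) < \<delta>"
    then have "(\<forall>i<k. a \<le> u i \<and> u i \<le> v i \<and> v i \<le> b)" using assms(2,3) by force
    with h show "(\<Sum>i<k. norm (\<gamma> (v i) - \<gamma> (u i))) < \<epsilon>"
      using spec[OF spec[OF spec[OF H, of k], of u], of v] by blast
  qed
qed

lemma ac_shift:
  assumes "abs_continuous_on a b \<gamma>"
  shows "abs_continuous_on (a - s) (b - s) (\<lambda>t. \<gamma> (t + s))"
  unfolding abs_continuous_on_def
proof (intro allI impI)
  fix \<epsilon> :: real assume e: "\<epsilon> > 0"
  from mp[OF spec[OF assms(1)[unfolded abs_continuous_on_def], of \<epsilon>] e]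
  obtain \<delta> where d: "\<delta> > 0" and H: "\<forall>(k::nat) (u::nat \<Rightarrow> real) (v::nat \<Rightarrow> real). (\<forall>i<k. a \<le> u i \<and> u i \<le> v i \<and> v i \<le> b) \<and>
        (\<forall>i<k. \<forall>j<k. i \<noteq> j \<longrightarrow> v i \<le> u j \<or> v j \<le> u i) \<and>
        (\<Sum>i<k. v i - u i) < \<delta>
        \<longrightarrow> (\<Sum>i<k. norm (\<gamma> (v i) - \<gamma> (u i))) < \<epsilon>" by blast
  show "\<exists>\<delta>>0. \<forall>(k::nat) (u::nat \<Rightarrow> real) (v::nat \<Rightarrow> real). (\<forall>i<k. a - s \<le> u i \<and> u i \<le> v i \<and> v i \<le> b - s) \<and>
        (\<forall>i<k. \<forall>j<k. i \<noteq> j \<longrightarrow> v i \<le> u j \<or> v j \<le> u i) \<and>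
        (\<Sum>i<k. v i - u i) < \<delta>
        \<longrightarrow> (\<Sum>i<k. norm (\<gamma> (v i + s) - \<gamma> (u i + s))) < \<epsilon>"
  proof (intro exI[of _ \<delta>] conjI d allI impI)
    fix k :: nat and u v :: "nat \<Rightarrow> real"
    assume h: "(\<forall>i<k. a - s \<le> u i \<and> u i \<le> v i \<and> v i \<le> b - s) \<and>
        (\<forall>i<k. \<forall>j<k. i \<noteq> j \<longrightarrow> v i \<le> u j \<or> v j \<le> u i) \<and> (\<Sum>i<k. v i - u i) < \<delta>"
    have 1: "(\<forall>i<k. a \<le> u i + s \<and> u i + s \<le> v i + s \<and> v i + s \<le> b)" using h by force
    have 2: "(\<forall>i<k. \<forall>j<k. i \<noteq> j \<longrightarrow> v i + s \<le> u j + s \<or> v j + s \<le> u i + s)" using h by force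
    have 3: "(\<Sum>i<k. (v i + s) - (u i + s)) < \<delta>" using h by simp
    show "(\<Sum>i<k. norm (\<gamma> (v i + s) - \<gamma> (u i + s))) < \<epsilon>"
      using spec[OF spec[OF spec[OF H, of k], of "\<lambda>i. u i + s"], of "\<lambda>i. v i + s"] 1 2 3 by simp
  qed
qed

lemma ac_dom:
  fixes \<phi> :: "real \<Rightarrow> 'c::real_normed_vector" and w :: "real \<Rightarrow> 'b::real_normed_vector"
  assumes acw: "abs_continuous_on a b w" and A: "A \<ge> 0" and B: "B \<ge> 0"
    and dom: "\<And>u v. a \<le> u \<Longrightarrow> u \<le> v \<Longrightarrow> v \<le> b \<Longrightarrow> norm (\<phi> v - \<phi> u) \<le> A * norm (w v - w u) + B * (v - u)"
  shows "abs_continuous_on a b \<phi>"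
  unfolding abs_continuous_on_def
proof (intro allI impI)
  fix \<epsilon> :: real assume e: "\<epsilon> > 0"
  have e2: "\<epsilon> / (2 * (A + 1)) > 0" using e A by simp
  from mp[OF spec[OF acw[unfolded abs_continuous_on_def], of "\<epsilon> / (2 * (A + 1))"] e2]
  obtain \<delta> where d: "\<delta> > 0" and H: "\<forall>(k::nat) (u::nat \<Rightarrow> real) (v::nat \<Rightarrow> real). (\<forall>i<k. a \<le> u i \<and> u i \<le> v i \<and> v i \<le> b) \<and>
        (\<forall>i<k. \<forall>j<k. i \<noteq> j \<longrightarrow> v i \<le> u j \<or> v j \<le> u i) \<and>
        (\<Sum>i<k. v i - u i) < \<delta>
        \<longrightarrow> (\<Sum>i<k. norm (w (v i) - w (u i))) < \<epsilon> / (2 * (A + 1))" by blast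
  define \<delta>' where "\<delta>' = min \<delta> (\<epsilon> / (2 * (B + 1)))"
  have d': "\<delta>' > 0" unfolding \<delta>'_def using d e B by simp
  show "\<exists>\<delta>>0. \<forall>(k::nat) (u::nat \<Rightarrow> real) (v::nat \<Rightarrow> real). (\<forall>i<k. a \<le> u i \<and> u i \<le> v i \<and> v i \<le> b) \<and>
        (\<forall>i<k. \<forall>j<k. i \<noteq> j \<longrightarrow> v i \<le> u j \<or> v j \<le> u i) \<and>
        (\<Sum>i<k. v i - u i) < \<delta>
        \<longrightarrow> (\<Sum>i<k. norm (\<phi> (v i) - \<phi> (u i))) < \<epsilon>"
  proof (intro exI[of _ \<delta>'] conjI d' allI impI)
    fix k :: nat and u v :: "nat \<Rightarrow> real"
    assume h: "(\<forall>i<k. a \<le> u i \<and> u i \<le> v i \<and> v i \<le> b) \<and>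
        (\<forall>i<k. \<forall>j<k. i \<noteq> j \<longrightarrow> v i \<le> u j \<or> v j \<le> u i) \<and> (\<Sum>i<k. v i - u i) < \<delta>'"
    have hd: "(\<Sum>i<k. v i - u i) < \<delta>" using h unfolding \<delta>'_def by linarith
    have hB: "(\<Sum>i<k. v i - u i) < \<epsilon> / (2 * (B + 1))" using h unfolding \<delta>'_def by linarith
    have W: "(\<Sum>i<k. norm (w (v i) - w (u i))) < \<epsilon> / (2 * (A + 1))"
      using spec[OF spec[OF spec[OF H, of k], of u], of v] h hd by blast
    have "(\<Sum>i<k. norm (\<phi> (v i) - \<phi> (u i))) \<le> (\<Sum>i<k. A * norm (w (v i) - w (u i)) + B * (v i - u i))"
      by (rule sum_mono) (use h dom in auto)
    also have "\<dots> = A * (\<Sum>i<k. norm (w (v i) - w (u i))) + B * (\<Sum>i<k. v i - u i)"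
      by (simp add: sum.distrib sum_distrib_left)
    also have "A * (\<Sum>i<k. norm (w (v i) - w (u i))) \<le> A * (\<epsilon> / (2 * (A + 1)))"
      using W A by (intro mult_left_mono) auto
    also have "A * (\<epsilon> / (2 * (A + 1))) \<le> \<epsilon> / 2"
      using A e by (simp add: field_simps)
    also have "B * (\<Sum>i<k. v i - u i) \<le> B * (\<epsilon> / (2 * (B + 1)))"
      using hB B by (intro mult_left_mono) auto
    also have "B * (\<epsilon> / (2 * (B + 1))) < \<epsilon> / 2"
      using B e by (simp add: field_simps)
    finally show "(\<Sum>i<k. norm (\<phi> (v i) - \<phi> (u i))) < \<epsilon>" by simp
  qed
qed


lemma ac_pair:
  fixes w1 :: "real \<Rightarrow> 'b::real_normed_vector" and w2 :: "real \<Rightarrow> 'c::real_normed_vector"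
  assumes ac1: "abs_continuous_on a b w1" and ac2: "abs_continuous_on a b w2"
  shows "abs_continuous_on a b (\<lambda>t. (w1 t, w2 t))"
  unfolding abs_continuous_on_def
proof (intro allI impI)
  fix \<epsilon> :: real assume e: "\<epsilon> > 0"
  have e2: "\<epsilon> / 2 > 0" using e by simp
  from mp[OF spec[OF ac1[unfolded abs_continuous_on_def], of "\<epsilon> / 2"] e2]
  obtain \<delta>1 where d1: "\<delta>1 > 0" and H1: "\<forall>(k::nat) (u::nat \<Rightarrow> real) (v::nat \<Rightarrow> real). (\<forall>i<k. a \<le> u i \<and> u i \<le> v i \<and> v i \<le> b) \<and>
        (\<forall>i<k. \<forall>j<k. i \<noteq> j \<longrightarrow> v i \<le> u j \<or> v j \<le> u i) \<and>
        (\<Sum>i<k. v i - u i) < \<delta>1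
        \<longrightarrow> (\<Sum>i<k. norm (w1 (v i) - w1 (u i))) < \<epsilon> / 2" by blast
  from mp[OF spec[OF ac2[unfolded abs_continuous_on_def], of "\<epsilon> / 2"] e2]
  obtain \<delta>2 where d2: "\<delta>2 > 0" and H2: "\<forall>(k::nat) (u::nat \<Rightarrow> real) (v::nat \<Rightarrow> real). (\<forall>i<k. a \<le> u i \<and> u i \<le> v i \<and> v i \<le> b) \<and>
        (\<forall>i<k. \<forall>j<k. i \<noteq> j \<longrightarrow> v i \<le> u j \<or> v j \<le> u i) \<and>
        (\<Sum>i<k. v i - u i) < \<delta>2
        \<longrightarrow> (\<Sum>i<k. norm (w2 (v i) - w2 (u i))) < \<epsilon> / 2" by blast
  show "\<exists>\<delta>>0. \<forall>(k::nat) (u::nat \<Rightarrow> real) (v::nat \<Rightarrow> real). (\<forall>i<k. a \<le> u i \<and> u i \<le> v i \<and> v i \<le> b) \<and>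
        (\<forall>i<k. \<forall>j<k. i \<noteq> j \<longrightarrow> v i \<le> u j \<or> v j \<le> u i) \<and>
        (\<Sum>i<k. v i - u i) < \<delta>
        \<longrightarrow> (\<Sum>i<k. norm ((w1 (v i), w2 (v i)) - (w1 (u i), w2 (u i)))) < \<epsilon>"
  proof (intro exI[of _ "min \<delta>1 \<delta>2"] conjI allI impI)
    show "min \<delta>1 \<delta>2 > 0" using d1 d2 by simp
    fix k :: nat and u v :: "nat \<Rightarrow> real"
    assume h: "(\<forall>i<k. a \<le> u i \<and> u i \<le> v i \<and> v i \<le> b) \<and>
        (\<forall>i<k. \<forall>j<k. i \<noteq> j \<longrightarrow> v i \<le> u j \<or> v j \<le> u i) \<and> (\<Sum>i<k. v i - u i) < min \<delta>1 \<delta>2"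
    have hd: "(\<Sum>i<k. v i - u i) < \<delta>1" "(\<Sum>i<k. v i - u i) < \<delta>2" using h by auto
    have W1: "(\<Sum>i<k. norm (w1 (v i) - w1 (u i))) < \<epsilon> / 2"
      using spec[OF spec[OF spec[OF H1, of k], of u], of v] h hd by blast
    have W2: "(\<Sum>i<k. norm (w2 (v i) - w2 (u i))) < \<epsilon> / 2"
      using spec[OF spec[OF spec[OF H2, of k], of u], of v] h hd by blast
    have "(\<Sum>i<k. norm ((w1 (v i), w2 (v i)) - (w1 (u i), w2 (u i)))) \<le>
          (\<Sum>i<k. norm (w1 (v i) - w1 (u i)) + norm (w2 (v i) - w2 (u i)))"
    proof (rule sum_mono)
      fix i
      have "norm ((w1 (v i), w2 (v i)) - (w1 (u i), w2 (u i))) = norm ((w1 (v i) - w1 (u i), 0) + (0, w2 (v i) - w2 (u i)))"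
        by simp
      also have "\<dots> \<le> norm ((w1 (v i) - w1 (u i), 0::'c)) + norm ((0::'b, w2 (v i) - w2 (u i)))"
        by (rule norm_triangle_ineq)
      finally show "norm ((w1 (v i), w2 (v i)) - (w1 (u i), w2 (u i))) \<le> norm (w1 (v i) - w1 (u i)) + norm (w2 (v i) - w2 (u i))"
        by (simp add: norm_Pair)
    qed
    also have "\<dots> < \<epsilon>" using W1 W2 by (simp add: sum.distrib)
    finally show "(\<Sum>i<k. norm ((w1 (v i), w2 (v i)) - (w1 (u i), w2 (u i)))) < \<epsilon>" .
  qed
qed

lemma exp_diff_le:
  fixes c u v :: real
  assumes "c \<ge> 0" "0 \<le> u" "u \<le> v"
  shows "\<bar>exp (- c * v) - exp (- c * u)\<bar> \<le> c * (v - u)"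
proof -
  have "exp (- c * v) = exp (- c * u) * exp (- (c * (v - u)))" by (simp add: exp_add[symmetric] algebra_simps)
  moreover have "1 - c * (v - u) \<le> exp (- (c * (v - u)))" using exp_ge_add_one_self[of "- (c * (v - u))"] by simp
  moreover have "exp (- (c * (v - u))) \<le> 1" using assms by (simp add: mult_nonneg_nonneg)
  moreover have "exp (- c * u) \<le> 1" "exp (- c * u) > 0" using assms by (auto simp: mult_nonneg_nonneg)
  moreover have "c * (v - u) \<ge> 0" using assms by simp
  ultimately show ?thesis
  proof -
    assume eq: "exp (- c * v) = exp (- c * u) * exp (- (c * (v - u)))"
      and a1: "1 - c * (v - u) \<le> exp (- (c * (v - u)))" and a2: "exp (- (c * (v - u))) \<le> 1"
      and a3: "exp (- c * u) \<le> 1" "exp (- c * u) > 0" and a4: "c * (v - u) \<ge> 0"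
    define E where "E = exp (- c * u)"
    define X where "X = exp (- (c * (v - u)))"
    have "\<bar>E * X - E\<bar> = E * (1 - X)" using a2 a3 unfolding E_def X_def by (simp add: algebra_simps abs_if mult_le_cancel_left1)
    also have "\<dots> \<le> 1 * (c * (v - u))"
      using a1 a2 a3 unfolding E_def X_def by (intro mult_mono) auto
    finally show ?thesis using eq unfolding E_def X_def by simp
  qed
qed

lemma sq_diff_le:
  fixes x y :: "'a::real_normed_vector"
  assumes "norm x \<le> M" "norm y \<le> M"
  shows "\<bar>(norm x)^2 - (norm y)^2\<bar> \<le> 2 * M * norm (x - y)"
proof -
  have e: "(norm x)^2 - (norm y)^2 = (norm x - norm y) * (norm x + norm y)"
    by (simp add: power2_eq_square algebra_simps)
  have "\<bar>(norm x)^2 - (norm y)^2\<bar> = \<bar>norm x - norm y\<bar> * (norm x + norm y)"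
    unfolding e abs_mult by simp
  also have "\<dots> \<le> norm (x - y) * (2 * M)"
    using mult_mono[OF norm_triangle_ineq3[of x y], of "norm x + norm y" "2 * M"] assms by simp
  finally show ?thesis by (simp add: algebra_simps)
qed

lemma ac_psi:
  fixes z1 z2 :: "real \<Rightarrow> 'a::real_normed_vector"
  assumes ac1: "abs_continuous_on 0 b z1" and ac2: "abs_continuous_on 0 b z2" and c: "c \<ge> 0"
  shows "abs_continuous_on 0 b (\<lambda>t. exp (- c * t) * (norm (z1 t - z2 t))^2)"
proof -
  have "continuous_on {0..b} (\<lambda>t. z1 t - z2 t)"
    using ac_cont[OF ac1] ac_cont[OF ac2] by (intro continuous_on_diff)
  then have "compact ((\<lambda>t. z1 t - z2 t) ` {0..b})" by (intro compact_continuous_image) auto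
  then obtain M0 where M0: "\<And>t. t \<in> {0..b} \<Longrightarrow> norm (z1 t - z2 t) \<le> M0"
    by (meson compact_imp_bounded bounded_iff imageI)
  define M where "M = max M0 0"
  have M: "\<And>t. t \<in> {0..b} \<Longrightarrow> norm (z1 t - z2 t) \<le> M" "M \<ge> 0" using M0 unfolding M_def by force+
  show ?thesis
  proof (rule ac_dom[OF ac_pair[OF ac1 ac2], of "4 * M" "M^2 * c"])
    show "0 \<le> 4 * M" "0 \<le> M^2 * c" using M c by auto
    fix u v assume uv: "0 \<le> u" "u \<le> v" "v \<le> b"
    define du where "du = z1 u - z2 u"
    define dv where "dv = z1 v - z2 v"
    have nu: "norm du \<le> M" "norm dv \<le> M" using M uv unfolding du_def dv_def by auto
    have ev: "exp (- c * v) \<le> 1" "exp (- c * v) > 0" using c uv by (auto simp: mult_nonneg_nonneg)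
    have pd: "norm (dv - du) \<le> 2 * norm ((z1 v, z2 v) - (z1 u, z2 u))"
    proof -
      have "dv - du = (z1 v - z1 u) - (z2 v - z2 u)" unfolding du_def dv_def by (simp add: algebra_simps)
      then have "norm (dv - du) \<le> norm (z1 v - z1 u) + norm (z2 v - z2 u)"
        using norm_triangle_ineq4 by metis
      also have "norm (z1 v - z1 u) \<le> norm ((z1 v, z2 v) - (z1 u, z2 u))"
        using norm_fst_le[of "z1 v - z1 u" "z2 v - z2 u"] by simp
      also have "norm (z2 v - z2 u) \<le> norm ((z1 v, z2 v) - (z1 u, z2 u))"
        using norm_snd_le[of "z2 v - z2 u" "z1 v - z1 u"] by simp
      finally show ?thesis by simp
    qed
    have "norm (exp (- c * v) * (norm dv)^2 - exp (- c * u) * (norm du)^2)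
        = \<bar>exp (- c * v) * ((norm dv)^2 - (norm du)^2) + (norm du)^2 * (exp (- c * v) - exp (- c * u))\<bar>"
      by (simp add: algebra_simps)
    also have "\<dots> \<le> exp (- c * v) * \<bar>(norm dv)^2 - (norm du)^2\<bar> + (norm du)^2 * \<bar>exp (- c * v) - exp (- c * u)\<bar>"
      using ev by (simp add: abs_mult abs_triangle_ineq[THEN order_trans])
    also have "\<dots> \<le> 1 * (2 * M * norm (dv - du)) + M^2 * (c * (v - u))"
    proof (intro add_mono mult_mono)
      show "\<bar>(norm dv)^2 - (norm du)^2\<bar> \<le> 2 * M * norm (dv - du)" using sq_diff_le[OF nu(2) nu(1)] .
      show "(norm du)^2 \<le> M^2" using nu by (simp add: power_mono)
      show "\<bar>exp (- c * v) - exp (- c * u)\<bar> \<le> c * (v - u)" using exp_diff_le c uv by blast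
    qed (use ev M in auto)
    also have "\<dots> \<le> 4 * M * norm ((z1 v, z2 v) - (z1 u, z2 u)) + M^2 * c * (v - u)"
    proof -
      have "2 * M * norm (dv - du) \<le> 2 * M * (2 * norm ((z1 v, z2 v) - (z1 u, z2 u)))"
        using pd M by (intro mult_left_mono) auto
      then show ?thesis by (simp add: algebra_simps)
    qed
    finally show "norm (exp (- c * v) * (norm (z1 v - z2 v))^2 - exp (- c * u) * (norm (z1 u - z2 u))^2)
        \<le> 4 * M * norm ((z1 v, z2 v) - (z1 u, z2 u)) + M^2 * c * (v - u)"
      unfolding du_def dv_def .
  qed
qed


lemma LL_D:
  assumes "locally_lipschitz F"
  obtains r L where "r > 0" "L \<ge> 0" "\<And>y z. y \<in> ball x r \<Longrightarrow> z \<in> ball x r \<Longrightarrow> dist (F y) (F z) \<le> L * dist y z"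
proof -
  obtain r L where r: "r > 0" and H: "\<forall>y\<in>ball x r. \<forall>z\<in>ball x r. dist (F y) (F z) \<le> L * dist y z"
    using assms unfolding locally_lipschitz_def by blast
  show ?thesis
  proof (rule that[OF r, of "max L 0"])
    fix y z assume "y \<in> ball x r" "z \<in> ball x r"
    then have "dist (F y) (F z) \<le> L * dist y z" using H by blast
    also have "\<dots> \<le> max L 0 * dist y z" by (intro mult_right_mono) auto
    finally show "dist (F y) (F z) \<le> max L 0 * dist y z" .
  qed simp
qed

lemma LL_I:
  assumes "\<And>x. \<exists>r>0. \<exists>L. \<forall>y\<in>ball x r. \<forall>z\<in>ball x r. dist (F y) (F z) \<le> L * dist y z"
  shows "locally_lipschitz F"
  using assms unfolding locally_lipschitz_def by blast

lemma LL_bound: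
  fixes F :: "'a::metric_space \<Rightarrow> 'b::real_normed_vector"
  assumes "locally_lipschitz F"
  obtains r B where "r > 0" "\<And>y. y \<in> ball x r \<Longrightarrow> norm (F y) \<le> B"
proof -
  obtain r L where r: "r > 0" "L \<ge> 0" and H: "\<And>y z. y \<in> ball x r \<Longrightarrow> z \<in> ball x r \<Longrightarrow> dist (F y) (F z) \<le> L * dist y z"
    using LL_D[OF assms] by blast
  show ?thesis
  proof (rule that[OF r(1), of "norm (F x) + L * r"])
    fix y assume y: "y \<in> ball x r"
    have "dist (F y) (F x) \<le> L * dist y x" using H[OF y] r by simp
    also have "\<dots> \<le> L * r" using y r by (intro mult_left_mono) (auto simp: dist_commute)
    finally have "dist (F y) (F x) \<le> L * r" .
    then show "norm (F y) \<le> norm (F x) + L * r" using norm_triangle_ineq2[of "F y" "F x"] by (simp add: dist_norm)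
  qed
qed

lemma LL_comb:
  fixes F :: "'a::metric_space \<Rightarrow> 'b::metric_space" and H :: "'a \<Rightarrow> 'c::metric_space"
    and K :: "'a \<Rightarrow> 'd::metric_space"
  assumes F: "locally_lipschitz F" and H: "locally_lipschitz H"
    and comb: "\<And>x. \<exists>r>0. \<exists>A B. \<forall>y\<in>ball x r. \<forall>z\<in>ball x r. dist (K y) (K z) \<le> A * dist (F y) (F z) + B * dist (H y) (H z)"
  shows "locally_lipschitz K"
proof (rule LL_I)
  fix x
  obtain r1 L1 where r1: "r1 > 0" "L1 \<ge> 0" and H1: "\<And>y z. y \<in> ball x r1 \<Longrightarrow> z \<in> ball x r1 \<Longrightarrow> dist (F y) (F z) \<le> L1 * dist y z"
    using LL_D[OF F] by blast
  obtain r2 L2 where r2: "r2 > 0" "L2 \<ge> 0" and H2: "\<And>y z. y \<in> ball x r2 \<Longrightarrow> z \<in> ball x r2 \<Longrightarrow> dist (H y) (H z) \<le> L2 * dist y z"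
    using LL_D[OF H] by blast
  obtain r3 A B where r3: "r3 > 0" and H3: "\<forall>y\<in>ball x r3. \<forall>z\<in>ball x r3. dist (K y) (K z) \<le> A * dist (F y) (F z) + B * dist (H y) (H z)"
    using comb by blast
  define r where "r = min r1 (min r2 r3)"
  show "\<exists>r>0. \<exists>L. \<forall>y\<in>ball x r. \<forall>z\<in>ball x r. dist (K y) (K z) \<le> L * dist y z"
  proof (rule exI[of _ r], intro conjI exI[of _ "\<bar>A\<bar> * L1 + \<bar>B\<bar> * L2"] ballI)
    show "r > 0" unfolding r_def using r1 r2 r3 by simp
    fix y z assume yz: "y \<in> ball x r" "z \<in> ball x r"
    then have yz1: "y \<in> ball x r1" "z \<in> ball x r1" and yz2: "y \<in> ball x r2" "z \<in> ball x r2"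
      and yz3: "y \<in> ball x r3" "z \<in> ball x r3" unfolding r_def by auto
    have "dist (K y) (K z) \<le> A * dist (F y) (F z) + B * dist (H y) (H z)" using H3 yz3 by blast
    also have "\<dots> \<le> \<bar>A\<bar> * (L1 * dist y z) + \<bar>B\<bar> * (L2 * dist y z)"
    proof (intro add_mono)
      have "A * dist (F y) (F z) \<le> \<bar>A\<bar> * dist (F y) (F z)" by (intro mult_right_mono) auto
      also have "\<dots> \<le> \<bar>A\<bar> * (L1 * dist y z)" using H1[OF yz1] by (intro mult_left_mono) auto
      finally show "A * dist (F y) (F z) \<le> \<bar>A\<bar> * (L1 * dist y z)" .
      have "B * dist (H y) (H z) \<le> \<bar>B\<bar> * dist (H y) (H z)" by (intro mult_right_mono) auto
      also have "\<dots> \<le> \<bar>B\<bar> * (L2 * dist y z)" using H2[OF yz2] by (intro mult_left_mono) auto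
      finally show "B * dist (H y) (H z) \<le> \<bar>B\<bar> * (L2 * dist y z)" .
    qed
    finally show "dist (K y) (K z) \<le> (\<bar>A\<bar> * L1 + \<bar>B\<bar> * L2) * dist y z" by (simp add: algebra_simps)
  qed
qed

lemma LL_add:
  fixes F H :: "'a::metric_space \<Rightarrow> 'b::real_normed_vector"
  assumes "locally_lipschitz F" "locally_lipschitz H"
  shows "locally_lipschitz (\<lambda>x. F x + H x)" "locally_lipschitz (\<lambda>x. F x - H x)"
proof -
  show "locally_lipschitz (\<lambda>x. F x + H x)"
  proof (rule LL_comb[OF assms])
    fix x show "\<exists>r>0. \<exists>A B. \<forall>y\<in>ball x r. \<forall>z\<in>ball x r. dist (F y + H y) (F z + H z) \<le> A * dist (F y) (F z) + B * dist (H y) (H z)"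
    proof (intro exI[of _ 1] conjI exI[of _ 1] ballI)
      fix y z
      have eq: "F y + H y - (F z + H z) = (F y - F z) + (H y - H z)" by (simp add: algebra_simps)
      show "dist (F y + H y) (F z + H z) \<le> 1 * dist (F y) (F z) + 1 * dist (H y) (H z)"
        unfolding dist_norm eq using norm_triangle_ineq[of "F y - F z" "H y - H z"] by simp
    qed simp
  qed
  show "locally_lipschitz (\<lambda>x. F x - H x)"
  proof (rule LL_comb[OF assms])
    fix x show "\<exists>r>0. \<exists>A B. \<forall>y\<in>ball x r. \<forall>z\<in>ball x r. dist (F y - H y) (F z - H z) \<le> A * dist (F y) (F z) + B * dist (H y) (H z)"
    proof (intro exI[of _ 1] conjI exI[of _ 1] ballI)
      fix y z
      have eq: "F y - H y - (F z - H z) = (F y - F z) - (H y - H z)" by (simp add: algebra_simps)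
      show "dist (F y - H y) (F z - H z) \<le> 1 * dist (F y) (F z) + 1 * dist (H y) (H z)"
        unfolding dist_norm eq using norm_triangle_ineq4[of "F y - F z" "H y - H z"] by simp
    qed simp
  qed
qed

lemma LL_scaleR:
  fixes F :: "'a::metric_space \<Rightarrow> real" and H :: "'a \<Rightarrow> 'b::real_normed_vector"
  assumes F: "locally_lipschitz F" and H: "locally_lipschitz H"
  shows "locally_lipschitz (\<lambda>x. F x *\<^sub>R H x)"
proof (rule LL_comb[OF F H])
  fix x
  obtain r1 B1 where r1: "r1 > 0" and B1: "\<And>y. y \<in> ball x r1 \<Longrightarrow> norm (F y) \<le> B1" using LL_bound[OF F] by blast
  obtain r2 B2 where r2: "r2 > 0" and B2: "\<And>y. y \<in> ball x r2 \<Longrightarrow> norm (H y) \<le> B2" using LL_bound[OF H] by blast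
  have "\<forall>y\<in>ball x (min r1 r2). \<forall>z\<in>ball x (min r1 r2). dist (F y *\<^sub>R H y) (F z *\<^sub>R H z) \<le> B2 * dist (F y) (F z) + B1 * dist (H y) (H z)"
  proof (intro ballI)
    fix y z assume "y \<in> ball x (min r1 r2)" "z \<in> ball x (min r1 r2)"
    then have b: "norm (F y) \<le> B1" "norm (H z) \<le> B2" using B1 B2 by auto
    have "F y *\<^sub>R H y - F z *\<^sub>R H z = F y *\<^sub>R (H y - H z) + (F y - F z) *\<^sub>R H z" by (simp add: algebra_simps)
    then have "norm (F y *\<^sub>R H y - F z *\<^sub>R H z) \<le> norm (F y *\<^sub>R (H y - H z)) + norm ((F y - F z) *\<^sub>R H z)"
      by (metis norm_triangle_ineq)
    also have "\<dots> = \<bar>F y\<bar> * norm (H y - H z) + \<bar>F y - F z\<bar> * norm (H z)" by simp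
    also have "\<dots> \<le> B1 * norm (H y - H z) + \<bar>F y - F z\<bar> * B2"
      using b by (intro add_mono mult_mono) auto
    finally show "dist (F y *\<^sub>R H y) (F z *\<^sub>R H z) \<le> B2 * dist (F y) (F z) + B1 * dist (H y) (H z)"
      by (simp add: dist_norm dist_real_def algebra_simps)
  qed
  moreover have "min r1 r2 > 0" using r1 r2 by simp
  ultimately show "\<exists>r>0. \<exists>A B. \<forall>y\<in>ball x r. \<forall>z\<in>ball x r. dist (F y *\<^sub>R H y) (F z *\<^sub>R H z) \<le> A * dist (F y) (F z) + B * dist (H y) (H z)"
    by blast
qed

lemma LL_const: "locally_lipschitz (\<lambda>x. c)"
  unfolding locally_lipschitz_def by (intro allI exI[of _ 1] conjI exI[of _ 0]) auto

lemma LL_sum: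
  fixes H :: "'i \<Rightarrow> 'a::metric_space \<Rightarrow> 'b::real_normed_vector"
  assumes "finite I" "\<And>i. i \<in> I \<Longrightarrow> locally_lipschitz (H i)"
  shows "locally_lipschitz (\<lambda>x. \<Sum>i\<in>I. H i x)"
  using assms by (induction I rule: finite_induct) (auto simp: LL_const intro: LL_add(1))

lemma LL_comp:
  fixes P :: "'a::metric_space \<Rightarrow> 'b::metric_space"
  assumes P: "\<And>y z. dist (P y) (P z) \<le> dist y z" and F: "locally_lipschitz (F :: 'b \<Rightarrow> 'c::metric_space)"
  shows "locally_lipschitz (\<lambda>x. F (P x))"
proof (rule LL_I)
  fix x
  obtain r L where r: "r > 0" "L \<ge> 0" and H: "\<And>y z. y \<in> ball (P x) r \<Longrightarrow> z \<in> ball (P x) r \<Longrightarrow> dist (F y) (F z) \<le> L * dist y z"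
    using LL_D[OF F] by blast
  show "\<exists>r>0. \<exists>L. \<forall>y\<in>ball x r. \<forall>z\<in>ball x r. dist (F (P y)) (F (P z)) \<le> L * dist y z"
  proof (rule exI[of _ r], intro conjI exI[of _ L] ballI)
    fix y z assume "y \<in> ball x r" "z \<in> ball x r"
    then have "P y \<in> ball (P x) r" "P z \<in> ball (P x) r" using P[of x y] P[of x z] by auto
    then have "dist (F (P y)) (F (P z)) \<le> L * dist (P y) (P z)" using H by blast
    also have "\<dots> \<le> L * dist y z" using P r by (intro mult_left_mono) auto
    finally show "dist (F (P y)) (F (P z)) \<le> L * dist y z" .
  qed (use r in auto)
qed

lemma LL_lip:
  assumes P: "\<And>y z. dist (P y) (P z) \<le> dist y z"
  shows "locally_lipschitz P"
  unfolding locally_lipschitz_def using P by (intro allI exI[of _ 1] conjI ballI) auto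

lemma LL_pair:
  fixes F :: "'a::metric_space \<Rightarrow> 'b::metric_space" and H :: "'a \<Rightarrow> 'c::metric_space"
  assumes "locally_lipschitz F" "locally_lipschitz H"
  shows "locally_lipschitz (\<lambda>x. (F x, H x))"
proof (rule LL_comb[OF assms])
  fix x show "\<exists>r>0. \<exists>A B. \<forall>y\<in>ball x r. \<forall>z\<in>ball x r. dist (F y, H y) (F z, H z) \<le> A * dist (F y) (F z) + B * dist (H y) (H z)"
  proof (intro exI[of _ 1] conjI exI[of _ 1] ballI)
    fix y z
    show "dist (F y, H y) (F z, H z) \<le> 1 * dist (F y) (F z) + 1 * dist (H y) (H z)"
      unfolding dist_Pair_Pair using sqrt_sum_squares_le_sum[OF zero_le_dist zero_le_dist] by simp
  qed simp
qed

lemma LL_vec: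
  fixes H :: "'i::finite \<Rightarrow> 'a::metric_space \<Rightarrow> real"
  assumes "\<And>i. locally_lipschitz (H i)"
  shows "locally_lipschitz (\<lambda>x. \<chi> i. H i x)"
proof -
  have eq: "(\<lambda>x. \<chi> i. H i x) = (\<lambda>x. \<Sum>i\<in>UNIV. H i x *\<^sub>R axis i 1)"
    by (rule ext) (simp add: vec_eq_iff axis_def if_distrib sum.delta' cong: if_cong)
  show ?thesis unfolding eq
    by (intro LL_sum LL_scaleR assms LL_const) simp
qed

lemma LL_compact:
  fixes F :: "'a::metric_space \<Rightarrow> 'b::metric_space"
  assumes F: "locally_lipschitz F" and K: "compact K"
  obtains \<rho> L where "\<rho> > 0" "\<And>y z1 z2. y \<in> K \<Longrightarrow> z1 \<in> ball y \<rho> \<Longrightarrow> z2 \<in> ball y \<rho> \<Longrightarrow> dist (F z1) (F z2) \<le> L * dist z1 z2"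
proof -
  have "\<forall>x. \<exists>r L. r > 0 \<and> L \<ge> 0 \<and> (\<forall>y z. y \<in> ball x r \<longrightarrow> z \<in> ball x r \<longrightarrow> dist (F y) (F z) \<le> L * dist y z)"
  proof
    fix x obtain r L where "r > 0" "L \<ge> 0" "\<And>y z. y \<in> ball x r \<Longrightarrow> z \<in> ball x r \<Longrightarrow> dist (F y) (F z) \<le> L * dist y z"
      using LL_D[OF F] by blast
    then show "\<exists>r L. r > 0 \<and> L \<ge> 0 \<and> (\<forall>y z. y \<in> ball x r \<longrightarrow> z \<in> ball x r \<longrightarrow> dist (F y) (F z) \<le> L * dist y z)" by blast
  qed
  then obtain r L where r: "\<And>x. r x > 0" "\<And>x. L x \<ge> 0" and H: "\<And>x y z. y \<in> ball x (r x) \<Longrightarrow> z \<in> ball x (r x) \<Longrightarrow> dist (F y) (F z) \<le> L x * dist y z"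
    by metis
  obtain C where C: "C \<subseteq> K" "finite C" "K \<subseteq> (\<Union>c\<in>C. ball c (r c / 2))"
    using compactE_image[OF K, of K "\<lambda>c. ball c (r c / 2)"] r by force
  show ?thesis
  proof (cases "C = {}")
    case True
    then have "K = {}" using C by auto
    then show ?thesis using that[of 1 0] by simp
  next
    case False
    define \<rho> where "\<rho> = Min ((\<lambda>c. r c / 2) ` C)"
    define LL where "LL = Max (L ` C)"
    have \<rho>: "\<rho> > 0" unfolding \<rho>_def using C False r by (subst Min_gr_iff) auto
    show ?thesis
    proof (rule that[OF \<rho>])
      fix y z1 z2 assume y: "y \<in> K" and z: "z1 \<in> ball y \<rho>" "z2 \<in> ball y \<rho>"
      obtain c where c: "c \<in> C" "y \<in> ball c (r c / 2)" using C y by auto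
      have "\<rho> \<le> r c / 2" unfolding \<rho>_def using C c by (intro Min_le) auto
      then have "z1 \<in> ball c (r c)" "z2 \<in> ball c (r c)"
        using c z dist_triangle[of c z1 y] dist_triangle[of c z2 y] by (auto simp: dist_commute)
      then have "dist (F z1) (F z2) \<le> L c * dist z1 z2" by (rule H)
      also have "\<dots> \<le> LL * dist z1 z2" unfolding LL_def using C c by (intro mult_right_mono Max_ge) auto
      finally show "dist (F z1) (F z2) \<le> LL * dist z1 z2" .
    qed
  qed
qed


lemma LL_C1:
  fixes h :: "'a::euclidean_space \<Rightarrow> real"
  assumes der: "\<And>x. (h has_derivative (\<lambda>v. dh x \<bullet> v)) (at x)" and dh: "locally_lipschitz dh"
  shows "locally_lipschitz h"
proof (rule LL_I)
  fix x
  obtain r B where r: "r > 0" and B: "\<And>y. y \<in> ball x r \<Longrightarrow> norm (dh y) \<le> B" using LL_bound[OF dh] by blast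
  have "\<forall>y\<in>ball x r. \<forall>z\<in>ball x r. dist (h y) (h z) \<le> B * dist y z"
  proof (intro ballI)
    fix y z assume yz: "y \<in> ball x r" "z \<in> ball x r"
    have "norm (h y - h z) \<le> B * norm (y - z)"
    proof (rule differentiable_bound[where f' = "\<lambda>x v. dh x \<bullet> v"])
      show "convex (ball x r)" by simp
      show "(h has_derivative (\<lambda>v. dh w \<bullet> v)) (at w within ball x r)" if "w \<in> ball x r" for w
        using der[of w] by (rule has_derivative_at_withinI)
      show "onorm (\<lambda>v. dh w \<bullet> v) \<le> B" if "w \<in> ball x r" for w
      proof (rule onorm_le)
        fix v show "norm (dh w \<bullet> v) \<le> B * norm v"
          using Cauchy_Schwarz_ineq2[of "dh w" v] B[OF that] mult_right_mono[of "norm (dh w)" B "norm v"]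
          by simp
      qed
    qed (use yz in auto)
    then show "dist (h y) (h z) \<le> B * dist y z" by (simp add: dist_norm)
  qed
  then show "\<exists>r>0. \<exists>L. \<forall>y\<in>ball x r. \<forall>z\<in>ball x r. dist (h y) (h z) \<le> L * dist y z" using r by blast
qed

definition Gf :: "(real^'n \<Rightarrow> real^'n) \<Rightarrow> ('m::finite \<Rightarrow> real^'n \<Rightarrow> real) \<Rightarrow> ('m \<Rightarrow> real^'n \<Rightarrow> real^'n)
   \<Rightarrow> (real^'n) \<times> (real^'m) \<Rightarrow> (real^'n) \<times> (real^'m)" where
  "Gf df g dg z = (df (fst z) - (\<Sum>i\<in>UNIV. (snd z $ i) *\<^sub>R dg i (fst z)), \<chi> i. g i (fst z))"

lemma LL_Gf:
  fixes df :: "real^'n \<Rightarrow> real^'n" and g :: "'m::finite \<Rightarrow> real^'n \<Rightarrow> real" and dg :: "'m \<Rightarrow> real^'n \<Rightarrow> real^'n"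
  assumes "locally_lipschitz df" "\<And>i. locally_lipschitz (dg i)" "\<And>i. locally_lipschitz (g i)"
  shows "locally_lipschitz (Gf df g dg)"
proof -
  have fstl: "\<And>y z :: (real^'n) \<times> (real^'m). dist (fst y) (fst z) \<le> dist y z" by (rule dist_fst_le)
  have sndl: "\<And>y z :: (real^'n) \<times> (real^'m). dist (snd y $ i) (snd z $ i) \<le> dist y z" for i
    using dist_vec_nth_le dist_snd_le order_trans by blast
  have 1: "locally_lipschitz (\<lambda>z::(real^'n) \<times> (real^'m). df (fst z))" by (rule LL_comp[OF fstl assms(1)])
  have 2: "locally_lipschitz (\<lambda>z::(real^'n) \<times> (real^'m). dg i (fst z))" for i by (rule LL_comp[OF fstl assms(2)])
  have 3: "locally_lipschitz (\<lambda>z::(real^'n) \<times> (real^'m). g i (fst z))" for i by (rule LL_comp[OF fstl assms(3)])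
  have 4: "locally_lipschitz (\<lambda>z::(real^'n) \<times> (real^'m). snd z $ i)" for i by (rule LL_lip[OF sndl])
  have "locally_lipschitz (\<lambda>z. (df (fst z) - (\<Sum>i\<in>UNIV. (snd z $ i) *\<^sub>R dg i (fst z)), \<chi> i. g i (fst z)))"
    by (intro LL_pair LL_add(2) 1 LL_sum LL_scaleR 2 4 LL_vec 3) simp
  then show ?thesis unfolding Gf_def[abs_def] .
qed

lemma proj_ineq:
  fixes a b p q :: real
  assumes "a \<ge> 0" "b \<ge> 0"
  shows "(a - b) * (proj_pos p a - proj_pos q b) \<le> (a - b) * (p - q)"
proof (cases "a > 0")
  case True
  show ?thesis
  proof (cases "b > 0")
    case True
    then show ?thesis using \<open>a > 0\<close> by (simp add: proj_pos_def)
  next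
    case False
    then have b0: "b = 0" using assms by simp
    have "a * (p - max 0 q) \<le> a * (p - q)" using True by (intro mult_left_mono) auto
    then show ?thesis using True b0 by (simp add: proj_pos_def)
  qed
next
  case False
  then have a0: "a = 0" using assms by simp
  show ?thesis
  proof (cases "b > 0")
    case True
    have "b * (p - max 0 p) \<le> 0" using True by (intro mult_nonneg_nonpos) auto
    then have "(- b) * (max 0 p - q) \<le> (- b) * (p - q)" by (simp add: algebra_simps)
    then show ?thesis using True a0 by (simp add: proj_pos_def)
  next
    case False
    then show ?thesis using a0 assms by simp
  qed
qed

lemma mono_ineq:
  fixes df :: "real^'n \<Rightarrow> real^'n" and g :: "'m::finite \<Rightarrow> real^'n \<Rightarrow> real" and dg :: "'m \<Rightarrow> real^'n \<Rightarrow> real^'n"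
  assumes "z1 \<in> pd_domain" "z2 \<in> pd_domain"
  shows "(z1 - z2) \<bullet> (primal_dual_field df g dg z1 - primal_dual_field df g dg z2)
       \<le> (z1 - z2) \<bullet> (Gf df g dg z1 - Gf df g dg z2)"
proof -
  obtain x1 l1 x2 l2 where z: "z1 = (x1, l1)" "z2 = (x2, l2)" by fastforce
  have l: "\<And>i. l1 $ i \<ge> 0" "\<And>i. l2 $ i \<ge> 0" using assms z unfolding pd_domain_def by auto
  have "(l1 - l2) \<bullet> ((\<chi> i. proj_pos (g i x1) (l1 $ i)) - (\<chi> i. proj_pos (g i x2) (l2 $ i)))
      \<le> (l1 - l2) \<bullet> ((\<chi> i. g i x1) - (\<chi> i. g i x2))"
    unfolding inner_vec_def
    by (intro sum_mono) (simp add: proj_ineq[OF l(1) l(2)])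
  then show ?thesis unfolding z primal_dual_field_def Gf_def by simp
qed


lemma gronwall_step:
  fixes F G :: "'a::euclidean_space \<Rightarrow> 'a" and \<eta> \<zeta> :: "real \<Rightarrow> 'a"
  assumes mono: "\<And>z1 z2. z1 \<in> D \<Longrightarrow> z2 \<in> D \<Longrightarrow> (z1 - z2) \<bullet> (F z1 - F z2) \<le> (z1 - z2) \<bullet> (G z1 - G z2)"
    and L: "L \<ge> 0"
    and b: "b \<ge> 0"
    and ac\<eta>: "abs_continuous_on 0 b \<eta>" and ac\<zeta>: "abs_continuous_on 0 b \<zeta>"
    and E: "negligible E"
    and der\<eta>: "\<And>t. t \<in> {0<..<b} \<Longrightarrow> t \<notin> E \<Longrightarrow> (\<eta> has_vector_derivative F (\<eta> t)) (at t)"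
    and der\<zeta>: "\<And>t. t \<in> {0<..<b} \<Longrightarrow> t \<notin> E \<Longrightarrow> (\<zeta> has_vector_derivative F (\<zeta> t)) (at t)"
    and inD: "\<And>t. t \<in> {0<..<b} \<Longrightarrow> \<eta> t \<in> D \<and> \<zeta> t \<in> D"
    and lip: "\<And>t. t \<in> {0<..<b} \<Longrightarrow> norm (G (\<zeta> t) - G (\<eta> t)) \<le> L * norm (\<zeta> t - \<eta> t)"
  shows "norm (\<zeta> b - \<eta> b) \<le> exp (L * b) * norm (\<zeta> 0 - \<eta> 0)"
proof -
  define c where "c = 2 * L"
  have c: "c \<ge> 0" using L unfolding c_def by simp
  define \<psi> where "\<psi> = (\<lambda>t. exp (- c * t) * (norm (\<zeta> t - \<eta> t))^2)"
  have ac\<psi>: "abs_continuous_on 0 b \<psi>" unfolding \<psi>_def by (rule ac_psi[OF ac\<zeta> ac\<eta> c])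
  have \<psi>eq: "\<psi> = (\<lambda>t. exp (- c * t) * ((\<zeta> t - \<eta> t) \<bullet> (\<zeta> t - \<eta> t)))"
    unfolding \<psi>_def by (simp add: power2_norm_eq_inner)
  have "\<psi> b \<le> \<psi> 0"
  proof (rule ac_mono[OF b ac\<psi> E])
    fix t assume t: "t \<in> {0<..<b}" "t \<notin> E"
    define w where "w = \<zeta> t - \<eta> t"
    define w' where "w' = F (\<zeta> t) - F (\<eta> t)"
    have dw: "((\<lambda>t. \<zeta> t - \<eta> t) has_vector_derivative w') (at t)"
      unfolding w'_def using der\<zeta>[OF t] der\<eta>[OF t] by (rule has_vector_derivative_diff)
    have dii: "((\<lambda>t. (\<zeta> t - \<eta> t) \<bullet> (\<zeta> t - \<eta> t)) has_real_derivative (w \<bullet> w' + w' \<bullet> w)) (at t)"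
      unfolding has_real_derivative_iff_has_vector_derivative w_def
      by (rule bounded_bilinear.has_vector_derivative[OF bounded_bilinear_inner dw dw])
    have de: "((\<lambda>t. exp (- c * t)) has_real_derivative (exp (- c * t) * (- c))) (at t)"
      by (auto intro!: derivative_eq_intros)
    have dpsi: "(\<psi> has_real_derivative (exp (- c * t) * (w \<bullet> w' + w' \<bullet> w) + exp (- c * t) * (- c) * (w \<bullet> w))) (at t)"
      unfolding \<psi>eq using DERIV_mult[OF de dii] by (simp add: w_def algebra_simps)
    have "w \<bullet> w' \<le> w \<bullet> (G (\<zeta> t) - G (\<eta> t))" unfolding w_def w'_def using mono inD[OF t(1)] by blast
    also have "\<dots> \<le> norm w * norm (G (\<zeta> t) - G (\<eta> t))" by (rule norm_cauchy_schwarz)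
    also have "\<dots> \<le> norm w * (L * norm w)" using lip[OF t(1)] unfolding w_def by (intro mult_left_mono) auto
    also have "\<dots> = L * (w \<bullet> w)" by (simp add: power2_norm_eq_inner[symmetric] power2_eq_square)
    finally have ww: "w \<bullet> w' \<le> L * (w \<bullet> w)" .
    have "w \<bullet> w' + w' \<bullet> w - c * (w \<bullet> w) \<le> 0" using ww unfolding c_def by (simp add: inner_commute)
    then have "exp (- c * t) * (w \<bullet> w' + w' \<bullet> w - c * (w \<bullet> w)) \<le> 0"
      by (intro mult_nonneg_nonpos) auto
    then show "\<exists>D. (\<psi> has_real_derivative D) (at t) \<and> D \<le> 0"
      using dpsi by (intro exI[of _ "exp (- c * t) * (w \<bullet> w' + w' \<bullet> w) + exp (- c * t) * (- c) * (w \<bullet> w)"]) (auto simp: algebra_simps)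
  qed
  then have "exp (- c * b) * (norm (\<zeta> b - \<eta> b))^2 \<le> (norm (\<zeta> 0 - \<eta> 0))^2" unfolding \<psi>_def by simp
  then have "(norm (\<zeta> b - \<eta> b))^2 \<le> exp (c * b) * (norm (\<zeta> 0 - \<eta> 0))^2"
    by (simp add: exp_minus field_simps)
  also have "exp (c * b) = (exp (L * b))^2" unfolding c_def by (simp add: exp_double[symmetric] power2_eq_square exp_add[symmetric] algebra_simps)
  finally have "(norm (\<zeta> b - \<eta> b))^2 \<le> (exp (L * b) * norm (\<zeta> 0 - \<eta> 0))^2" by (simp add: power_mult_distrib)
  then show ?thesis by (rule power2_le_imp_le) simp
qed


lemma cont_dep:
  fixes F G :: "'a::euclidean_space \<Rightarrow> 'a" and \<eta> :: "real \<Rightarrow> 'a"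
  assumes mono: "\<And>z1 z2. z1 \<in> D \<Longrightarrow> z2 \<in> D \<Longrightarrow> (z1 - z2) \<bullet> (F z1 - F z2) \<le> (z1 - z2) \<bullet> (G z1 - G z2)"
    and LLG: "locally_lipschitz G" and t1: "t1 \<ge> 0" and ac\<eta>: "abs_continuous_on 0 t1 \<eta>"
  obtains \<rho> L where "\<rho> > 0" "L \<ge> 0"
    "\<And>\<zeta> E. abs_continuous_on 0 t1 \<zeta> \<Longrightarrow> negligible E \<Longrightarrow>
       (\<And>t. t \<in> {0<..<t1} \<Longrightarrow> t \<notin> E \<Longrightarrow> (\<eta> has_vector_derivative F (\<eta> t)) (at t)) \<Longrightarrow>
       (\<And>t. t \<in> {0<..<t1} \<Longrightarrow> t \<notin> E \<Longrightarrow> (\<zeta> has_vector_derivative F (\<zeta> t)) (at t)) \<Longrightarrow>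
       (\<And>t. t \<in> {0..t1} \<Longrightarrow> \<eta> t \<in> D \<and> \<zeta> t \<in> D) \<Longrightarrow>
       exp (L * t1) * norm (\<zeta> 0 - \<eta> 0) < \<rho> \<Longrightarrow>
       \<forall>t\<in>{0..t1}. norm (\<zeta> t - \<eta> t) \<le> exp (L * t) * norm (\<zeta> 0 - \<eta> 0)"
proof -
  have c\<eta>: "continuous_on {0..t1} \<eta>" by (rule ac_cont[OF ac\<eta>])
  have K: "compact (\<eta> ` {0..t1})" using c\<eta> by (intro compact_continuous_image) auto
  obtain \<rho> L0 where \<rho>: "\<rho> > 0" and HL: "\<And>y z1 z2. y \<in> \<eta> ` {0..t1} \<Longrightarrow> z1 \<in> ball y \<rho> \<Longrightarrow> z2 \<in> ball y \<rho> \<Longrightarrow> dist (G z1) (G z2) \<le> L0 * dist z1 z2"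
    using LL_compact[OF LLG K] by blast
  define L where "L = max L0 0"
  have L: "L \<ge> 0" unfolding L_def by simp
  show ?thesis
  proof (rule that[OF \<rho> L])
    fix \<zeta> E
    assume ac\<zeta>: "abs_continuous_on 0 t1 \<zeta>" and E: "negligible E"
      and der\<eta>: "\<And>t. t \<in> {0<..<t1} \<Longrightarrow> t \<notin> E \<Longrightarrow> (\<eta> has_vector_derivative F (\<eta> t)) (at t)"
      and der\<zeta>: "\<And>t. t \<in> {0<..<t1} \<Longrightarrow> t \<notin> E \<Longrightarrow> (\<zeta> has_vector_derivative F (\<zeta> t)) (at t)"
      and inD: "\<And>t. t \<in> {0..t1} \<Longrightarrow> \<eta> t \<in> D \<and> \<zeta> t \<in> D"
      and small: "exp (L * t1) * norm (\<zeta> 0 - \<eta> 0) < \<rho>"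
    have step: "norm (\<zeta> b - \<eta> b) \<le> exp (L * b) * norm (\<zeta> 0 - \<eta> 0)"
      if b: "b \<in> {0..t1}" and lt: "\<And>t. t \<in> {0<..<b} \<Longrightarrow> norm (\<zeta> t - \<eta> t) < \<rho>" for b
    proof (rule gronwall_step[OF mono L _ _ _ E])
      show "0 \<le> b" using b by simp
      show "abs_continuous_on 0 b \<eta>" using ac_sub[OF ac\<eta>, of 0 b] b by simp
      show "abs_continuous_on 0 b \<zeta>" using ac_sub[OF ac\<zeta>, of 0 b] b by simp
      fix t assume t: "t \<in> {0<..<b}"
      then have t1': "t \<in> {0<..<t1}" using b by auto
      show "t \<notin> E \<Longrightarrow> (\<eta> has_vector_derivative F (\<eta> t)) (at t)" using der\<eta>[OF t1'] by blast
      show "t \<notin> E \<Longrightarrow> (\<zeta> has_vector_derivative F (\<zeta> t)) (at t)" using der\<zeta>[OF t1'] by blast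
      show "\<eta> t \<in> D \<and> \<zeta> t \<in> D" using inD t1' by auto
      have "\<eta> t \<in> \<eta> ` {0..t1}" using t1' by auto
      moreover have "\<zeta> t \<in> ball (\<eta> t) \<rho>" using lt[OF t] by (simp add: dist_norm norm_minus_commute)
      moreover have "\<eta> t \<in> ball (\<eta> t) \<rho>" using \<rho> by simp
      ultimately have "dist (G (\<zeta> t)) (G (\<eta> t)) \<le> L0 * dist (\<zeta> t) (\<eta> t)" by (rule HL)
      also have "\<dots> \<le> L * dist (\<zeta> t) (\<eta> t)" unfolding L_def by (intro mult_right_mono) auto
      finally show "norm (G (\<zeta> t) - G (\<eta> t)) \<le> L * norm (\<zeta> t - \<eta> t)" by (simp add: dist_norm)
    qed
    have all: "\<forall>t\<in>{0..t1}. norm (\<zeta> t - \<eta> t) < \<rho>"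
    proof (rule ccontr)
      assume neg: "\<not> (\<forall>t\<in>{0..t1}. norm (\<zeta> t - \<eta> t) < \<rho>)"
      define S where "S = {0..t1} \<inter> (\<lambda>t. norm (\<zeta> t - \<eta> t)) -` {\<rho>..}"
      have Sne: "S \<noteq> {}" using neg unfolding S_def by auto
      have cd: "continuous_on {0..t1} (\<lambda>t. norm (\<zeta> t - \<eta> t))"
        using ac_cont[OF ac\<zeta>] c\<eta> by (intro continuous_intros)
      have Scl: "closed S" unfolding S_def by (rule continuous_closed_preimage[OF cd]) auto
      have Sbdd: "bdd_below S" unfolding S_def by (rule bdd_belowI[of _ 0]) auto
      define s where "s = Inf S"
      have sS: "s \<in> S" unfolding s_def using closed_contains_Inf[OF Sne Sbdd Scl] .
      have s01: "s \<in> {0..t1}" using sS unfolding S_def by auto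
      have "norm (\<zeta> t - \<eta> t) < \<rho>" if t: "t \<in> {0<..<s}" for t
      proof (rule ccontr)
        assume "\<not> ?thesis"
        then have "t \<in> S" using t s01 unfolding S_def by auto
        then have "s \<le> t" unfolding s_def using Sbdd by (rule cInf_lower)
        then show False using t by simp
      qed
      then have "norm (\<zeta> s - \<eta> s) \<le> exp (L * s) * norm (\<zeta> 0 - \<eta> 0)" using step[OF s01] by blast
      also have "\<dots> \<le> exp (L * t1) * norm (\<zeta> 0 - \<eta> 0)"
        using s01 L by (intro mult_right_mono) (auto intro: mult_left_mono)
      also have "\<dots> < \<rho>" by (rule small)
      finally show False using sS unfolding S_def by auto
    qed
    show "\<forall>t\<in>{0..t1}. norm (\<zeta> t - \<eta> t) \<le> exp (L * t) * norm (\<zeta> 0 - \<eta> 0)"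
    proof
      fix t assume t: "t \<in> {0..t1}"
      show "norm (\<zeta> t - \<eta> t) \<le> exp (L * t) * norm (\<zeta> 0 - \<eta> 0)"
        using step[OF t] all t by auto
    qed
  qed
qed


lemma shift_sol:
  fixes F :: "'a::euclidean_space \<Rightarrow> 'a"
  assumes sol: "caratheodory_sol_inf F D \<gamma>" and s: "s \<ge> 0" and t: "t \<ge> 0"
  shows "abs_continuous_on 0 t (\<lambda>\<tau>. \<gamma> (\<tau> + s))"
    and "\<And>\<tau>. \<tau> \<in> {0..t} \<Longrightarrow> \<gamma> (\<tau> + s) \<in> D"
    and "\<exists>E. negligible E \<and> (\<forall>\<tau>\<in>{0<..<t}. \<tau> \<notin> E \<longrightarrow> ((\<lambda>\<tau>. \<gamma> (\<tau> + s)) has_vector_derivative F (\<gamma> (\<tau> + s))) (at \<tau>))"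
proof -
  define T' where "T' = t + s + 1"
  have T': "T' > 0" unfolding T'_def using s t by simp
  have cs: "caratheodory_sol F D \<gamma> T'" using sol T' unfolding caratheodory_sol_inf_def by blast
  have ac: "abs_continuous_on 0 (t + s) \<gamma>" using cs s t unfolding caratheodory_sol_def T'_def by simp
  have "abs_continuous_on s (t + s) \<gamma>" using ac_sub[OF ac, of s "t + s"] s by simp
  from ac_shift[OF this, of s] show "abs_continuous_on 0 t (\<lambda>\<tau>. \<gamma> (\<tau> + s))" by simp
  show "\<gamma> (\<tau> + s) \<in> D" if "\<tau> \<in> {0..t}" for \<tau>
    using cs that s unfolding caratheodory_sol_def T'_def by auto
  define E\<gamma> where "E\<gamma> = {\<tau> \<in> {0..<T'}. \<not> (\<gamma> has_vector_derivative F (\<gamma> \<tau>)) (at \<tau>)}"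
  have nE\<gamma>: "negligible E\<gamma>" using cs unfolding caratheodory_sol_def E\<gamma>_def by blast
  define E where "E = (+) (- s) ` E\<gamma>"
  have nE: "negligible E" unfolding E_def by (rule negligible_translation[OF nE\<gamma>])
  have "\<forall>\<tau>\<in>{0<..<t}. \<tau> \<notin> E \<longrightarrow> ((\<lambda>\<tau>. \<gamma> (\<tau> + s)) has_vector_derivative F (\<gamma> (\<tau> + s))) (at \<tau>)"
  proof (intro ballI impI)
    fix \<tau> assume \<tau>: "\<tau> \<in> {0<..<t}" "\<tau> \<notin> E"
    have "\<tau> + s \<notin> E\<gamma>"
    proof
      assume "\<tau> + s \<in> E\<gamma>"
      then have "- s + (\<tau> + s) \<in> E" unfolding E_def by blast
      then show False using \<tau> by simp
    qed
    moreover have "\<tau> + s \<in> {0..<T'}" using \<tau> s unfolding T'_def by auto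
    ultimately have d: "(\<gamma> has_vector_derivative F (\<gamma> (\<tau> + s))) (at (\<tau> + s))" unfolding E\<gamma>_def by blast
    have df: "((\<lambda>\<tau>. \<tau> + s) has_vector_derivative 1) (at \<tau>)"
      by (auto intro!: derivative_eq_intros simp: has_real_derivative_iff_has_vector_derivative[symmetric])
    have "((\<gamma> \<circ> (\<lambda>\<tau>. \<tau> + s)) has_vector_derivative (1 *\<^sub>R F (\<gamma> (\<tau> + s)))) (at \<tau>)"
      using vector_diff_chain_at[OF df] d by simp
    then show "((\<lambda>\<tau>. \<gamma> (\<tau> + s)) has_vector_derivative F (\<gamma> (\<tau> + s))) (at \<tau>)" by (simp add: comp_def)
  qed
  then show "\<exists>E. negligible E \<and> (\<forall>\<tau>\<in>{0<..<t}. \<tau> \<notin> E \<longrightarrow> ((\<lambda>\<tau>. \<gamma> (\<tau> + s)) has_vector_derivative F (\<gamma> (\<tau> + s))) (at \<tau>))"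
    using nE by blast
qed

theorem lemma4p4:
  fixes f :: "real^'n \<Rightarrow> real" and df :: "real^'n \<Rightarrow> real^'n"
    and g :: "'m::finite \<Rightarrow> real^'n \<Rightarrow> real" and dg :: "'m \<Rightarrow> real^'n \<Rightarrow> real^'n"
    and \<gamma> :: "real \<Rightarrow> (real^'n) \<times> (real^'m)"
  assumes f_grad: "\<And>x. (f has_derivative (\<lambda>h. df x \<bullet> h)) (at x)"
    and df_cont: "continuous_on UNIV df"
    and f_sconc: "strictly_concave_on UNIV f"
    and g_grad: "\<And>i x. (g i has_derivative (\<lambda>h. dg i x \<bullet> h)) (at x)"
    and dg_cont: "\<And>i. continuous_on UNIV (dg i)"
    and g_conv: "\<And>i. convex_on UNIV (g i)"
    and df_lip: "locally_lipschitz df"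
    and dg_lip: "\<And>i. locally_lipschitz (dg i)"
    and slater: "\<exists>x. \<forall>i. g i x < 0"
    and sol: "caratheodory_sol_inf (primal_dual_field df g dg) pd_domain \<gamma>"
  shows "invariant_set (primal_dual_field df g dg) pd_domain (omega_limit \<gamma>)"
  unfolding invariant_set_def
proof (intro allI impI ballI)
  let ?F = "primal_dual_field df g dg"
  let ?G = "Gf df g dg"
  fix \<eta> T t
  assume h: "T > 0 \<and> caratheodory_sol ?F pd_domain \<eta> T \<and> \<eta> 0 \<in> omega_limit \<gamma>" and t: "t \<in> {0..<T}"
  have mono: "\<And>z1 z2. z1 \<in> pd_domain \<Longrightarrow> z2 \<in> pd_domain \<Longrightarrow> (z1 - z2) \<bullet> (?F z1 - ?F z2) \<le> (z1 - z2) \<bullet> (?G z1 - ?G z2)"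
    by (rule mono_ineq)
  have LLG: "locally_lipschitz ?G"
    by (rule LL_Gf[OF df_lip dg_lip LL_C1[OF g_grad dg_lip]])
  have t0: "t \<ge> 0" using t by simp
  have ac\<eta>: "abs_continuous_on 0 t \<eta>" using h t unfolding caratheodory_sol_def by auto
  define E\<eta> where "E\<eta> = {\<tau> \<in> {0..<T}. \<not> (\<eta> has_vector_derivative ?F (\<eta> \<tau>)) (at \<tau>)}"
  have nE\<eta>: "negligible E\<eta>" using h unfolding caratheodory_sol_def E\<eta>_def by blast
  have der\<eta>: "(\<eta> has_vector_derivative ?F (\<eta> \<tau>)) (at \<tau>)" if "\<tau> \<in> {0<..<t}" "\<tau> \<notin> E\<eta>" for \<tau>
    using that t unfolding E\<eta>_def by auto
  have inD\<eta>: "\<eta> \<tau> \<in> pd_domain" if "\<tau> \<in> {0..t}" for \<tau>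
    using h that t unfolding caratheodory_sol_def by auto
  obtain s where s: "filterlim s at_top sequentially" and sl: "(\<lambda>k. \<gamma> (s k)) \<longlonglongrightarrow> \<eta> 0"
    using h unfolding omega_limit_def by blast
  obtain \<rho> L where \<rho>: "\<rho> > 0" and L: "L \<ge> 0" and CD: "\<And>\<zeta> E. abs_continuous_on 0 t \<zeta> \<Longrightarrow> negligible E \<Longrightarrow>
       (\<And>\<tau>. \<tau> \<in> {0<..<t} \<Longrightarrow> \<tau> \<notin> E \<Longrightarrow> (\<eta> has_vector_derivative ?F (\<eta> \<tau>)) (at \<tau>)) \<Longrightarrow>
       (\<And>\<tau>. \<tau> \<in> {0<..<t} \<Longrightarrow> \<tau> \<notin> E \<Longrightarrow> (\<zeta> has_vector_derivative ?F (\<zeta> \<tau>)) (at \<tau>)) \<Longrightarrow>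
       (\<And>\<tau>. \<tau> \<in> {0..t} \<Longrightarrow> \<eta> \<tau> \<in> pd_domain \<and> \<zeta> \<tau> \<in> pd_domain) \<Longrightarrow>
       exp (L * t) * norm (\<zeta> 0 - \<eta> 0) < \<rho> \<Longrightarrow>
       \<forall>\<tau>\<in>{0..t}. norm (\<zeta> \<tau> - \<eta> \<tau>) \<le> exp (L * \<tau>) * norm (\<zeta> 0 - \<eta> 0)"
    using cont_dep[where D = pd_domain, OF mono LLG t0 ac\<eta>] by blast
  have est: "norm (\<gamma> (t + s k) - \<eta> t) \<le> exp (L * t) * norm (\<gamma> (s k) - \<eta> 0)"
    if sk: "s k \<ge> 0" and sm: "exp (L * t) * norm (\<gamma> (s k) - \<eta> 0) < \<rho>" for k
  proof -
    obtain E\<zeta> where nE\<zeta>: "negligible E\<zeta>" and der\<zeta>: "\<forall>\<tau>\<in>{0<..<t}. \<tau> \<notin> E\<zeta> \<longrightarrow> ((\<lambda>\<tau>. \<gamma> (\<tau> + s k)) has_vector_derivative ?F (\<gamma> (\<tau> + s k))) (at \<tau>)"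
      using shift_sol(3)[OF sol sk t0] by blast
    have "\<forall>\<tau>\<in>{0..t}. norm (\<gamma> (\<tau> + s k) - \<eta> \<tau>) \<le> exp (L * \<tau>) * norm (\<gamma> (0 + s k) - \<eta> 0)"
    proof (rule CD[where E = "E\<eta> \<union> E\<zeta>"])
      show "abs_continuous_on 0 t (\<lambda>\<tau>. \<gamma> (\<tau> + s k))" by (rule shift_sol(1)[OF sol sk t0])
      show "negligible (E\<eta> \<union> E\<zeta>)" using nE\<eta> nE\<zeta> by simp
      show "(\<eta> has_vector_derivative ?F (\<eta> \<tau>)) (at \<tau>)" if "\<tau> \<in> {0<..<t}" "\<tau> \<notin> E\<eta> \<union> E\<zeta>" for \<tau>
        using der\<eta> that by blast
      show "((\<lambda>\<tau>. \<gamma> (\<tau> + s k)) has_vector_derivative ?F (\<gamma> (\<tau> + s k))) (at \<tau>)" if "\<tau> \<in> {0<..<t}" "\<tau> \<notin> E\<eta> \<union> E\<zeta>" for \<tau>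
        using der\<zeta> that by blast
      show "\<eta> \<tau> \<in> pd_domain \<and> \<gamma> (\<tau> + s k) \<in> pd_domain" if "\<tau> \<in> {0..t}" for \<tau>
        using inD\<eta>[OF that] shift_sol(2)[OF sol sk t0 that] by blast
      show "exp (L * t) * norm (\<gamma> (0 + s k) - \<eta> 0) < \<rho>" using sm by simp
    qed
    then show ?thesis using t0 by (simp add: add.commute)
  qed
  have ev1: "eventually (\<lambda>k. s k \<ge> 0) sequentially"
    using s by (simp add: filterlim_at_top)
  have nl: "(\<lambda>k. norm (\<gamma> (s k) - \<eta> 0)) \<longlonglongrightarrow> 0"
    using sl by (simp add: tendsto_norm_zero_iff Lim_null[symmetric])
  then have gl: "(\<lambda>k. exp (L * t) * norm (\<gamma> (s k) - \<eta> 0)) \<longlonglongrightarrow> 0"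
    by (simp add: tendsto_mult_right_zero)
  have ev2: "eventually (\<lambda>k. exp (L * t) * norm (\<gamma> (s k) - \<eta> 0) < \<rho>) sequentially"
    by (rule order_tendstoD(2)[OF gl \<rho>])
  have ev: "eventually (\<lambda>k. norm (\<gamma> (t + s k) - \<eta> t) \<le> exp (L * t) * norm (\<gamma> (s k) - \<eta> 0)) sequentially"
    using ev1 ev2 by eventually_elim (rule est)
  have "((\<lambda>k. \<gamma> (t + s k) - \<eta> t) \<longlonglongrightarrow> 0)"
    by (rule Lim_null_comparison[OF ev gl])
  then have conv: "(\<lambda>k. \<gamma> (t + s k)) \<longlonglongrightarrow> \<eta> t" by (simp add: Lim_null[symmetric])
  have div: "filterlim (\<lambda>k. t + s k) at_top sequentially"
    by (rule filterlim_tendsto_add_at_top[OF tendsto_const s])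
  show "\<eta> t \<in> omega_limit \<gamma>" unfolding omega_limit_def
    using div conv by blast
qed


end
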